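(* Let $\alpha(n)=o(\log n)$ be a monotone non-decreasing function of $n$. There is an instance of fully dynamic load balancing (in the restricted assignment setting), with $n$ jobs for arbitrarily large $n$, such that any offline algorithm that maintains at all times a fractional schedule of the active jobs with makespan at most $\alpha(n)T^*$ must incur an amortized recourse of $n^{\Omega(1/\alpha(n))}$.
   Context: Fully dynamic load balancing with recourse (restricted assignment): there is a set $M$ of machines and a set $J$ of $n$ jobs; job $j$ has a size $p_j$ and a set of machines on which it may be placed, and placing it (or a fraction of it) on an allowed machine contributes $p_j$ (times the fraction) to that machine's load. Jobs arrive and depart over time, each job arriving exactly once and departing exactly once, for $2n$ events in total; it is guaranteed that at every time the active jobs admit a schedule of makespan at most a given $T^*$. A fractional schedule assigns to each active job $j$ nonnegative fractions on its allowed machines summing to $1$; its makespan is the maximum over machines of the total fractional load. Moving an $x$ fraction of a job from one machine to another incurs recourse $x$. An algorithm has amortized recourse $\beta$ if for every $t$ the total recourse during the first $t$ events is at most $\beta t$. An offline algorithm knows the entire event sequence in advance. *)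

theory Defs
  imports Complex_Main "HOL-Library.Landau_Symbols"
begin

text \<open>Job j arrives at event arr j and
 departs at event dep j; the 2n events are numbered 1..2n, each a single arrival or departure.\<close>

definition valid_events :: "nat \<Rightarrow> (nat \<Rightarrow> nat) \<Rightarrow> (nat \<Rightarrow> nat) \<Rightarrow> bool" where
  "valid_events n arr dep \<longleftrightarrow>
     (\<forall>j<n. arr j < dep j) \<and> inj_on arr {..<n} \<and> inj_on dep {..<n} \<and>
     arr ` {..<n} \<inter> dep ` {..<n} = {} \<and>
     arr ` {..<n} \<union> dep ` {..<n} = {1..2*n}"

definition active :: "nat \<Rightarrow> (nat \<Rightarrow> nat) \<Rightarrow> (nat \<Rightarrow> nat) \<Rightarrow> nat \<Rightarrow> nat set" where
  "active n arr dep t = {j. j < n \<and> arr j \<le> t \<and> t < dep j}"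

definition admits_schedule :: "nat set \<Rightarrow> (nat \<Rightarrow> real) \<Rightarrow> (nat \<Rightarrow> nat set) \<Rightarrow> nat set \<Rightarrow> real \<Rightarrow> bool" where
  "admits_schedule M p A J T \<longleftrightarrow>
     (\<exists>\<sigma>::nat \<Rightarrow> nat. (\<forall>j\<in>J. \<sigma> j \<in> A j) \<and>
        (\<forall>i\<in>M. (\<Sum>j\<in>{j\<in>J. \<sigma> j = i}. p j) \<le> T))"

definition valid_instance :: "nat set \<Rightarrow> nat \<Rightarrow> (nat \<Rightarrow> real) \<Rightarrow> (nat \<Rightarrow> nat set)
    \<Rightarrow> (nat \<Rightarrow> nat) \<Rightarrow> (nat \<Rightarrow> nat) \<Rightarrow> real \<Rightarrow> bool" where
  "valid_instance M n p A arr dep T \<longleftrightarrow>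
     finite M \<and> M \<noteq> {} \<and> (\<forall>j<n. 0 < p j \<and> A j \<subseteq> M \<and> A j \<noteq> {}) \<and>
     valid_events n arr dep \<and>
     (\<forall>t\<le>2*n. admits_schedule M p A (active n arr dep t) T)"

text \<open>Fractional schedule y (y j i = fraction of job j on machine i) of the job set J.\<close>
definition frac_schedule :: "nat set \<Rightarrow> (nat \<Rightarrow> nat set) \<Rightarrow> nat set \<Rightarrow> (nat \<Rightarrow> nat \<Rightarrow> real) \<Rightarrow> bool" where
  "frac_schedule M A J y \<longleftrightarrow>
     (\<forall>j\<in>J. (\<forall>i. 0 \<le> y j i) \<and> (\<forall>i. i \<notin> A j \<longrightarrow> y j i = 0) \<and> (\<Sum>i\<in>M. y j i) = 1)"

definition frac_load :: "(nat \<Rightarrow> real) \<Rightarrow> nat set \<Rightarrow> (nat \<Rightarrow> nat \<Rightarrow> real) \<Rightarrow> nat \<Rightarrow> real" where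
  "frac_load p J y i = (\<Sum>j\<in>J. p j * y j i)"

definition makespan :: "nat set \<Rightarrow> (nat \<Rightarrow> real) \<Rightarrow> nat set \<Rightarrow> (nat \<Rightarrow> nat \<Rightarrow> real) \<Rightarrow> real" where
  "makespan M p J y = Max ((\<lambda>i. frac_load p J y i) ` M)"

text \<open>Recourse of going from fractional schedule y0 to y1: for every job active in both,
 the minimum total fraction that must be moved between machines, i.e. half the L1 distance.\<close>
definition step_recourse :: "nat set \<Rightarrow> nat set \<Rightarrow> nat set \<Rightarrow> (nat \<Rightarrow> nat \<Rightarrow> real)
    \<Rightarrow> (nat \<Rightarrow> nat \<Rightarrow> real) \<Rightarrow> real" where
  "step_recourse M J0 J1 y0 y1 = (\<Sum>j\<in>J0 \<inter> J1. (\<Sum>i\<in>M. \<bar>y1 j i - y0 j i\<bar>) / 2)"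

text \<open>An (offline) algorithm is a sequence x of fractional schedules, x t being the schedule
 after the first t events, t = 0..2n.\<close>
definition total_recourse :: "nat set \<Rightarrow> nat \<Rightarrow> (nat \<Rightarrow> nat) \<Rightarrow> (nat \<Rightarrow> nat)
    \<Rightarrow> (nat \<Rightarrow> nat \<Rightarrow> nat \<Rightarrow> real) \<Rightarrow> nat \<Rightarrow> real" where
  "total_recourse M n arr dep x t =
     (\<Sum>s\<in>{1..t}. step_recourse M (active n arr dep (s - 1)) (active n arr dep s) (x (s - 1)) (x s))"

definition maintains_makespan :: "nat set \<Rightarrow> nat \<Rightarrow> (nat \<Rightarrow> real) \<Rightarrow> (nat \<Rightarrow> nat set)
    \<Rightarrow> (nat \<Rightarrow> nat) \<Rightarrow> (nat \<Rightarrow> nat) \<Rightarrow> (nat \<Rightarrow> nat \<Rightarrow> nat \<Rightarrow> real) \<Rightarrow> real \<Rightarrow> bool" where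
  "maintains_makespan M n p A arr dep x B \<longleftrightarrow>
     (\<forall>t\<le>2*n. frac_schedule M A (active n arr dep t) (x t) \<and>
               makespan M p (active n arr dep t) (x t) \<le> B)"

definition amortized_recourse :: "nat set \<Rightarrow> nat \<Rightarrow> (nat \<Rightarrow> nat) \<Rightarrow> (nat \<Rightarrow> nat)
    \<Rightarrow> (nat \<Rightarrow> nat \<Rightarrow> nat \<Rightarrow> real) \<Rightarrow> real \<Rightarrow> bool" where
  "amortized_recourse M n arr dep x \<beta> \<longleftrightarrow>
     (\<forall>t\<in>{1..2*n}. total_recourse M n arr dep x t \<le> \<beta> * real t)"

end

theory Submission
  imports Defs
begin


locale inst =
  fixes h k :: nat
  assumes h2: "2 \<le> h" and k1: "1 \<le> k"
begin

definition c :: "nat \<Rightarrow> nat" where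
  "c i = (if i < k then 2^(k-i-1) * h^(k-i) else 1)"

definition L :: "nat \<Rightarrow> nat" where
  "L i = (k - i + 2) * (2*h)^(k-i)"

fun a :: "nat \<Rightarrow> nat \<Rightarrow> nat" where
  "a 0 r = 1"
| "a (Suc i) r = a i (r div (2*h)) + c i + (r mod (2*h)) * L (Suc i)"

lemma c_pos: "1 \<le> c i"
  using h2 by (simp add: c_def)

lemma c_k: "c k = 1" by (simp add: c_def)
lemma L_k: "L k = 2" by (simp add: L_def)

lemma two_c: "i < k \<Longrightarrow> 2 * c i = (2*h)^(k-i)"
proof -
  assume ik: "i < k"
  obtain m where m: "k - i = Suc m" using ik by (metis Suc_diff_Suc)
  have ci: "c i = 2^m * h^(Suc m)" unfolding c_def using ik by (simp only: m diff_Suc_1 if_True)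
  have "(2*h)^(Suc m) = 2^(Suc m) * h^(Suc m)" by (rule power_mult_distrib)
  then show ?thesis unfolding m ci by simp
qed

lemma L_rec: "i < k \<Longrightarrow> L i = 2 * c i + 2*h * L (Suc i)"
proof -
  assume ik: "i < k"
  obtain m where m: "k - i = Suc m" using ik by (metis Suc_diff_Suc)
  then have m2: "k - Suc i = m" by simp
  have e3: "Suc m + 2 = m + 3" by simp
  have "L i = (m + 3) * (2*h)^(Suc m)" by (simp only: L_def m e3)
  also have "\<dots> = (2*h)^(Suc m) + 2*h * ((m+2) * (2*h)^m)"
  proof -
    have "\<And>X::nat. (m + 3) * (2*h*X) = 2*h*X + 2*h*((m+2)*X)" by (simp add: algebra_simps)
    then show ?thesis by (simp only: power_Suc)
  qed
  also have "\<dots> = 2 * c i + 2*h * L (Suc i)"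
    using two_c[OF ik] unfolding L_def m2 m by simp
  finally show ?thesis .
qed

lemma L_ge: "i \<le> k \<Longrightarrow> 2 * c i \<le> L i"
  by (cases "i < k") (auto simp: L_rec c_k L_k)

lemma a_child: "j < 2*h \<Longrightarrow> a (Suc i) (r * (2*h) + j) = a i r + c i + j * L (Suc i)"
  using h2 by simp

lemma a_pos: "1 \<le> a i r"
  by (induction i arbitrary: r) (simp_all add: trans_le_add1)

lemma div_pow_Suc: "x div (2*h)^(Suc m) = x div (2*h)^m div (2*h)"
  by (simp only: power_Suc2 div_mult2_eq)

definition arrT :: "nat \<times> nat \<times> nat \<Rightarrow> nat" where
  "arrT J = (case J of (i,r,q) \<Rightarrow> a i r + q)"
definition depT :: "nat \<times> nat \<times> nat \<Rightarrow> nat" where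
  "depT J = (case J of (i,r,q) \<Rightarrow> a i r + L i - c i + q)"
definition tm :: "(nat \<times> nat \<times> nat) \<times> bool \<Rightarrow> nat" where
  "tm e = (if snd e then arrT (fst e) else depT (fst e))"

definition Ev :: "nat \<Rightarrow> nat \<Rightarrow> ((nat \<times> nat \<times> nat) \<times> bool) set" where
  "Ev i r = {((i',r',q),b). i \<le> i' \<and> i' \<le> k \<and> r' div (2*h)^(i'-i) = r \<and> q < c i'}"

lemma Ev_leaf: "Ev k r = {((k,r,0),True), ((k,r,0),False)}"
  unfolding Ev_def using c_k by auto

lemma Ev_split:
  assumes "i < k"
  shows "Ev i r = ({((i,r,q),True) | q. q < c i} \<union> {((i,r,q),False) | q. q < c i})
           \<union> (\<Union>j<2*h. Ev (Suc i) (r*(2*h) + j))"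
proof (intro equalityI subsetI)
  fix e assume e: "e \<in> Ev i r"
  then obtain i' r' q b where eq: "e = ((i',r',q),b)" and 
     h1: "i \<le> i'" "i' \<le> k" "r' div (2*h)^(i'-i) = r" "q < c i'"
    unfolding Ev_def by auto
  show "e \<in> ({((i,r,q),True) | q. q < c i} \<union> {((i,r,q),False) | q. q < c i})
           \<union> (\<Union>j<2*h. Ev (Suc i) (r*(2*h) + j))"
  proof (cases "i' = i")
    case True
    then show ?thesis using eq h1 by (cases b) auto
  next
    case False
    then have "i' - i = Suc (i' - Suc i)" using h1 by simp
    then have "r' div (2*h)^(i'-i) = r' div (2*h)^(i' - Suc i) div (2*h)"
      by (simp only: div_pow_Suc)
    then have "r' div (2*h)^(i' - Suc i) = r*(2*h) + (r' div (2*h)^(i' - Suc i)) mod (2*h)"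
      using h1(3) by (metis mult.commute div_mult_mod_eq)
    moreover have "(r' div (2*h)^(i' - Suc i)) mod (2*h) < 2*h" using h2 by simp
    ultimately have "r' div (2*h)^(i' - Suc i) = r*(2*h) + (r' div (2*h)^(i' - Suc i)) mod (2*h)"
      and jlt: "(r' div (2*h)^(i' - Suc i)) mod (2*h) < 2*h" by auto
    then have "e \<in> Ev (Suc i) (r*(2*h) + (r' div (2*h)^(i' - Suc i)) mod (2*h))"
      unfolding Ev_def eq using h1 False by auto
    then show ?thesis using jlt by blast
  qed
next
  fix e assume e: "e \<in> ({((i,r,q),True) | q. q < c i} \<union> {((i,r,q),False) | q. q < c i})
           \<union> (\<Union>j<2*h. Ev (Suc i) (r*(2*h) + j))"
  show "e \<in> Ev i r"
  proof (cases "e \<in> (\<Union>j<2*h. Ev (Suc i) (r*(2*h) + j))")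
    case True
    then obtain j i' r' q b where j: "j < 2*h" and eq: "e = ((i',r',q),b)" and
      h1: "Suc i \<le> i'" "i' \<le> k" "r' div (2*h)^(i'-Suc i) = r*(2*h)+j" "q < c i'"
      unfolding Ev_def by auto
    have "i' - i = Suc (i' - Suc i)" using h1 by simp
    then have "r' div (2*h)^(i'-i) = r' div (2*h)^(i' - Suc i) div (2*h)"
      by (simp only: div_pow_Suc)
    also have "\<dots> = r" using h1(3) j by simp
    finally show ?thesis using eq h1 unfolding Ev_def by auto
  next
    case False
    then show ?thesis using e assms unfolding Ev_def by auto
  qed
qed

lemma bij_children:
  assumes IH: "\<And>j. j < 2*h \<Longrightarrow> bij_betw tm (Ev (Suc i) (r*(2*h)+j))
                   {a (Suc i) (r*(2*h)+j) ..< a (Suc i) (r*(2*h)+j) + L (Suc i)}"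
  shows "m \<le> 2*h \<Longrightarrow> bij_betw tm (\<Union>j<m. Ev (Suc i) (r*(2*h) + j))
             {a i r + c i ..< a i r + c i + m * L (Suc i)}"
proof (induction m)
  case 0
  then show ?case by (simp add: bij_betw_def)
next
  case (Suc m)
  have m: "m < 2*h" using Suc by simp
  have e1: "(\<Union>j<Suc m. Ev (Suc i) (r*(2*h) + j)) = (\<Union>j<m. Ev (Suc i) (r*(2*h) + j)) \<union> Ev (Suc i) (r*(2*h) + m)"
    by (auto simp: lessThan_Suc)
  have IHm: "bij_betw tm (Ev (Suc i) (r*(2*h)+m))
     {a i r + c i + m*L(Suc i) ..< a i r + c i + m * L(Suc i) + L (Suc i)}"
    using IH[OF m] by (simp only: a_child[OF m])
  have e2: "{a i r + c i ..< a i r + c i + Suc m * L (Suc i)} =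
      {a i r + c i ..< a i r + c i + m * L (Suc i)} \<union> 
      {a i r + c i + m*L(Suc i) ..< a i r + c i + m * L(Suc i) + L (Suc i)}"
    by auto
  show ?case unfolding e1 e2
    by (rule bij_betw_combine[OF Suc.IH IHm]) (use Suc in auto)
qed

lemma bij_Ev: "i \<le> k \<Longrightarrow> bij_betw tm (Ev i r) {a i r ..< a i r + L i}"
proof (induction "k - i" arbitrary: i r)
  case 0
  then have ik: "i = k" by simp
  have "{a k r ..< a k r + L k} = {a k r, a k r + 1}" using L_k by auto
  moreover have "tm ((k,r,0),True) = a k r" "tm ((k,r,0),False) = a k r + 1"
    by (auto simp: tm_def arrT_def depT_def L_k c_k)
  ultimately show ?case unfolding ik Ev_leaf bij_betw_def by auto
next
  case (Suc m)
  then have ik: "i < k" by simp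
  have IH: "\<And>j. j < 2*h \<Longrightarrow> bij_betw tm (Ev (Suc i) (r*(2*h)+j))
                   {a (Suc i) (r*(2*h)+j) ..< a (Suc i) (r*(2*h)+j) + L (Suc i)}"
  proof -
    fix j assume "j < 2*h"
    have "m = k - Suc i" using Suc.hyps(2) by simp
    from Suc.hyps(1)[OF this Suc_leI[OF ik]] show "bij_betw tm (Ev (Suc i) (r*(2*h)+j))
                   {a (Suc i) (r*(2*h)+j) ..< a (Suc i) (r*(2*h)+j) + L (Suc i)}" .
  qed
  have ch: "bij_betw tm (\<Union>j<2*h. Ev (Suc i) (r*(2*h) + j))
             {a i r + c i ..< a i r + c i + 2*h * L (Suc i)}"
    using bij_children[OF IH] by simp
  have arrs: "bij_betw tm {((i,r,q),True) | q. q < c i} {a i r ..< a i r + c i}"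
    by (rule bij_betw_byWitness[where f'="\<lambda>t. ((i,r,t - a i r),True)"])
       (auto simp: tm_def arrT_def)
  have cL: "c i \<le> L i" using L_ge[of i] ik by simp
  have deps: "bij_betw tm {((i,r,q),False) | q. q < c i} {a i r + L i - c i ..< a i r + L i}"
    by (rule bij_betw_byWitness[where f'="\<lambda>t. ((i,r,t - (a i r + L i - c i)),False)"])
       (use cL in \<open>auto simp: tm_def depT_def\<close>)
  have LL: "L i = 2 * c i + 2*h * L (Suc i)" using L_rec[OF ik] .
  have own: "bij_betw tm ({((i,r,q),True) | q. q < c i} \<union> {((i,r,q),False) | q. q < c i})
     ({a i r ..< a i r + c i} \<union> {a i r + L i - c i ..< a i r + L i})"
    by (rule bij_betw_combine[OF arrs deps]) (use LL in auto)
  have "bij_betw tm (({((i,r,q),True) | q. q < c i} \<union> {((i,r,q),False) | q. q < c i})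
           \<union> (\<Union>j<2*h. Ev (Suc i) (r*(2*h) + j)))
     (({a i r ..< a i r + c i} \<union> {a i r + L i - c i ..< a i r + L i}) \<union>
       {a i r + c i ..< a i r + c i + 2*h * L (Suc i)})"
    by (rule bij_betw_combine[OF own ch]) (use LL in auto)
  moreover have "({a i r ..< a i r + c i} \<union> {a i r + L i - c i ..< a i r + L i}) \<union>
       {a i r + c i ..< a i r + c i + 2*h * L (Suc i)} = {a i r ..< a i r + L i}"
    using LL by auto
  ultimately show ?case using Ev_split[OF ik] by simp
qed

end

context inst begin

definition JS :: "(nat \<times> nat \<times> nat) set" where
  "JS = {(i,r,q). i \<le> k \<and> r < (2*h)^i \<and> q < c i}"

lemma dpos: "0 < 2*h" using h2 by simp

lemma div_pow_add: "x div (2*h)^(m+n) = x div (2*h)^m div (2*h)^n"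
  by (simp add: power_add div_mult2_eq)

lemma Ev_sub:
  assumes "i \<le> i'" "r' div (2*h)^(i'-i) = r"
  shows "Ev i' r' \<subseteq> Ev i r"
proof
  fix e assume "e \<in> Ev i' r'"
  then obtain i'' r'' q b where e: "e = ((i'',r'',q),b)" "i' \<le> i''" "i'' \<le> k"
    "r'' div (2*h)^(i''-i') = r'" "q < c i''" unfolding Ev_def by auto
  have "i'' - i = (i'' - i') + (i' - i)" using e(2) assms(1) by simp
  then have "r'' div (2*h)^(i''-i) = r" using e(4) assms(2) by (simp only: div_pow_add)
  then show "e \<in> Ev i r" using e assms(1) unfolding Ev_def by auto
qed

lemma Ev_disj: "r1 \<noteq> r2 \<Longrightarrow> Ev i r1 \<inter> Ev i r2 = {}"
  unfolding Ev_def by auto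

lemma Ev_root: "Ev 0 0 = {(J,b). J \<in> JS}"
  using h2 unfolding Ev_def JS_def by (auto simp: div_eq_0_iff)

lemma Ev_sub_root: "r < (2*h)^i \<Longrightarrow> Ev i r \<subseteq> Ev 0 0"
  by (rule Ev_sub) (auto simp: div_eq_0_iff dpos)

lemma inj_root: "inj_on tm (Ev 0 0)"
  using bij_Ev[of 0 0] by (simp add: bij_betw_def)

lemma img_Ev: "i \<le> k \<Longrightarrow> tm ` Ev i r = {a i r ..< a i r + L i}"
  using bij_Ev by (simp add: bij_betw_def)

lemma I_disj:
  assumes "i \<le> k" "r1 < (2*h)^i" "r2 < (2*h)^i" "r1 \<noteq> r2"
  shows "{a i r1 ..< a i r1 + L i} \<inter> {a i r2 ..< a i r2 + L i} = {}"
proof -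
  have "tm ` Ev i r1 \<inter> tm ` Ev i r2 = tm ` (Ev i r1 \<inter> Ev i r2)"
    by (rule inj_on_image_Int[OF inj_root, symmetric]) (use Ev_sub_root assms in auto)
  then show ?thesis using img_Ev[OF assms(1)] Ev_disj[OF assms(4)] by simp
qed

lemma I_sub:
  assumes "i \<le> i'" "i' \<le> k" "r' div (2*h)^(i'-i) = r"
  shows "{a i' r' ..< a i' r' + L i'} \<subseteq> {a i r ..< a i r + L i}"
  using img_Ev[of i' r'] img_Ev[of i r] Ev_sub[OF assms(1,3)] assms by (metis image_mono order.trans)

lemma L_pos: "i \<le> k \<Longrightarrow> 2 \<le> L i"
  using L_ge[of i] c_pos[of i] by simp

lemma nest:
  assumes "i < i'" "i' \<le> k" "r' div (2*h)^(i'-i) = r"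
  shows "a i r + c i \<le> a i' r' \<and> a i' r' + L i' \<le> a i r + L i - c i"
proof -
  define j where "j = (r' div (2*h)^(i' - Suc i)) mod (2*h)"
  have jd: "j < 2*h" unfolding j_def using dpos by simp
  have "i' - i = Suc (i' - Suc i)" using assms by simp
  then have "r' div (2*h)^(i'-i) = r' div (2*h)^(i' - Suc i) div (2*h)"
    by (simp only: div_pow_Suc)
  then have ch: "r' div (2*h)^(i' - Suc i) = r*(2*h) + j"
    unfolding j_def using assms(3) by (metis mult.commute div_mult_mod_eq)
  have sub: "{a i' r' ..< a i' r' + L i'} \<subseteq> {a (Suc i) (r*(2*h)+j) ..< a (Suc i) (r*(2*h)+j) + L (Suc i)}"
    by (rule I_sub) (use assms ch in auto)
  have ne: "a i' r' \<in> {a i' r' ..< a i' r' + L i'}" using L_pos[OF assms(2)] by simp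
  have ik: "i < k" using assms by simp
  have LL: "L i = 2 * c i + 2*h * L (Suc i)" using L_rec[OF ik] .
  have "(j+1) * L (Suc i) \<le> 2*h * L (Suc i)" using jd by (intro mult_right_mono) auto
  then show ?thesis using sub ne a_child[OF jd, of i r] LL
    by (auto simp: algebra_simps)
qed

lemma comparable:
  assumes "i1 \<le> i2" "i2 \<le> k" "r1 < (2*h)^i1" "r2 < (2*h)^i2"
    "t \<in> {a i1 r1 ..< a i1 r1 + L i1}" "t \<in> {a i2 r2 ..< a i2 r2 + L i2}"
  shows "r2 div (2*h)^(i2-i1) = r1"
proof -
  obtain e1 where e1: "e1 \<in> Ev i1 r1" "tm e1 = t" using img_Ev[of i1 r1] assms by (metis imageE order.trans)
  obtain e2 where e2: "e2 \<in> Ev i2 r2" "tm e2 = t" using img_Ev[of i2 r2] assms by (metis imageE)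
  have "e1 = e2" using inj_root e1 e2 Ev_sub_root[OF assms(3)] Ev_sub_root[OF assms(4)]
    by (auto simp: inj_on_def)
  then obtain i'' r'' q b where "e1 = ((i'',r'',q),b)" "i2 \<le> i''" "r'' div (2*h)^(i''-i1) = r1"
     "r'' div (2*h)^(i''-i2) = r2" using e1 e2 unfolding Ev_def by auto
  moreover have "i'' - i1 = (i'' - i2) + (i2 - i1)" using calculation assms by simp
  ultimately show ?thesis by (metis div_pow_add)
qed

lemma finite_JS: "finite JS"
proof -
  have "JS \<subseteq> {..k} \<times> {..<(2*h)^k} \<times> {..<(2*h)^k}"
  proof
    fix J assume "J \<in> JS"
    then obtain i r q where J: "J = (i,r,q)" "i \<le> k" "r < (2*h)^i" "q < c i" unfolding JS_def by auto
    have "(2*h)^i \<le> (2*h)^k" by (rule power_increasing) (use J h2 in auto)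
    moreover have "c i \<le> (2*h)^k"
    proof (cases "i < k")
      case True
      then have "c i \<le> (2*h)^(k-i)" using two_c[OF True] by simp
      also have "\<dots> \<le> (2*h)^k" by (rule power_increasing) (use h2 in auto)
      finally show ?thesis .
    next
      case False then show ?thesis using c_def dpos by (simp add: Suc_leI)
    qed
    ultimately show "J \<in> {..k} \<times> {..<(2*h)^k} \<times> {..<(2*h)^k}" using J by auto
  qed
  then show ?thesis by (rule finite_subset) auto
qed

lemma card_JS: "2 * card JS = L 0"
proof -
  have "Ev 0 0 = JS \<times> UNIV" unfolding Ev_root by auto
  then have "card (Ev 0 0) = card JS * 2" by (simp add: card_cartesian_product)
  moreover have "card (Ev 0 0) = L 0" using bij_Ev[of 0 0] bij_betw_same_card by fastforce
  ultimately show ?thesis by simp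
qed

lemma a_range:
  assumes "i \<le> k" "r < (2*h)^i"
  shows "1 \<le> a i r" "a i r + L i \<le> 1 + L 0"
proof -
  show "1 \<le> a i r" by (rule a_pos)
  have "{a i r ..< a i r + L i} \<subseteq> {a 0 0 ..< a 0 0 + L 0}"
    by (rule I_sub) (use assms in \<open>auto simp: div_eq_0_iff dpos\<close>)
  moreover have "a i r \<in> {a i r ..< a i r + L i}" using L_pos[OF assms(1)] by simp
  moreover have "a i r + L i - 1 \<in> {a i r ..< a i r + L i}" using L_pos[OF assms(1)] by simp
  ultimately show "a i r + L i \<le> 1 + L 0" by fastforce
qed

definition act :: "nat \<Rightarrow> nat \<times> nat \<times> nat \<Rightarrow> bool" where
  "act t J \<longleftrightarrow> arrT J \<le> t \<and> t < depT J"

lemma anc_act: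
  assumes "i < i'" "i' \<le> k" "q < c i" "a i' r' \<le> s + 1" "s < a i' r' + L i'"
  shows "act s (i, r' div (2*h)^(i'-i), q)"
  using nest[OF assms(1,2) refl, of r'] assms unfolding act_def arrT_def depT_def by auto

lemma own_act:
  assumes "q < c i" "a i r + c i \<le> s + 1" "s < a i r + L i - c i"
  shows "act s (i, r, q)"
  using assms unfolding act_def arrT_def depT_def by auto

lemma act_I: "act t (i,r,q) \<Longrightarrow> q < c i \<Longrightarrow> i \<le> k \<Longrightarrow> t \<in> {a i r ..< a i r + L i}"
  using L_ge[of i] unfolding act_def arrT_def depT_def by auto

end

context inst begin

fun pre :: "nat \<Rightarrow> nat \<Rightarrow> nat" where
  "pre 0 r = 0"
| "pre (Suc i) r = 2 * pre i (r div (2*h)) + (r mod (2*h)) mod 2"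

definition S :: "nat \<Rightarrow> nat \<Rightarrow> nat set" where
  "S i r = {x. x < 2^k \<and> x div 2^(k-i) = pre i r}"

lemma pre_lt: "pre i r < 2^i"
proof (induction i arbitrary: r)
  case 0 then show ?case by simp
next
  case (Suc i)
  have "pre i (r div (2*h)) < 2^i" by (rule Suc.IH)
  moreover have "(r mod (2*h)) mod 2 < 2" by simp
  ultimately show ?case by simp
qed

lemma div_iff: "(0::nat) < m \<Longrightarrow> x div m = p \<longleftrightarrow> p * m \<le> x \<and> x < p * m + m"
  by (metis add.commute div_less_iff_less_mult div_mult_self1 div_nat_eqI dividend_less_times_div
      le_add_diff_inverse2 less_mult_imp_div_less mult.commute mult_Suc nat_neq_iff 
      times_div_less_eq_dividend)

lemma S_interval:
  assumes "i \<le> k"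
  shows "S i r = {pre i r * 2^(k-i) ..< pre i r * 2^(k-i) + 2^(k-i)}"
proof -
  have "pre i r + 1 \<le> 2^i" using pre_lt[of i r] by simp
  then have "(pre i r + 1) * 2^(k-i) \<le> 2^i * 2^(k-i)" by (rule mult_right_mono) simp
  also have "\<dots> = 2^k" using assms by (simp flip: power_add)
  finally have b: "pre i r * 2^(k-i) + 2^(k-i) \<le> 2^k" by (simp add: algebra_simps)
  show ?thesis unfolding S_def using b div_iff[of "2^(k-i)"] by auto
qed

lemma S_sub_M: "S i r \<subseteq> {..<2^k}" unfolding S_def by auto

lemma finite_S: "finite (S i r)" using S_sub_M finite_subset by blast

lemma card_S: "i \<le> k \<Longrightarrow> card (S i r) = 2^(k-i)"
  using S_interval by simp

lemma S_ne: "i \<le> k \<Longrightarrow> pre i r * 2^(k-i) \<in> S i r"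
  using S_interval by simp

lemma S_leaf: "S k r = {pre k r}"
  using S_interval[of k r] by simp

lemma pre_child: "j < 2*h \<Longrightarrow> pre (Suc i) (r*(2*h)+j) = 2 * pre i r + j mod 2"
  using dpos by simp

lemma S_half:
  assumes "i < k" "j < 2*h"
  shows "S (Suc i) (r*(2*h)+j) = {x \<in> S i r. (x div 2^(k - Suc i)) mod 2 = j mod 2}"
proof -
  have e: "k - i = Suc (k - Suc i)" using assms by simp
  have "\<And>x::nat. x div 2^(k-i) = x div 2^(k - Suc i) div 2"
    unfolding e by (simp add: div_mult2_eq power_Suc2 del: power_Suc)
  moreover have "\<And>y p::nat. y = 2 * p + j mod 2 \<longleftrightarrow> y div 2 = p \<and> y mod 2 = j mod 2"
  proof -
    fix y p :: nat
    show "y = 2 * p + j mod 2 \<longleftrightarrow> y div 2 = p \<and> y mod 2 = j mod 2"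
    proof
      assume "y = 2 * p + j mod 2" then show "y div 2 = p \<and> y mod 2 = j mod 2" by simp
    next
      assume "y div 2 = p \<and> y mod 2 = j mod 2"
      then show "y = 2 * p + j mod 2" using div_mult_mod_eq[of y 2] by linarith
    qed
  qed
  ultimately show ?thesis unfolding S_def pre_child[OF assms(2)] by auto
qed

lemma pre_div:
  assumes "i \<le> i'"
  shows "pre i' r' div 2^(i'-i) = pre i (r' div (2*h)^(i'-i))"
  using assms
proof (induction i' arbitrary: r')
  case 0 then show ?case by simp
next
  case (Suc i')
  show ?case
  proof (cases "i = Suc i'")
    case True then show ?thesis by simp
  next
    case False
    then have ii: "i \<le> i'" using Suc by simp
    have e: "Suc i' - i = Suc (i' - i)" using ii by simp
    have "pre (Suc i') r' div 2^(Suc i' - i) = (2 * pre i' (r' div (2*h)) + (r' mod (2*h)) mod 2) div 2 div 2^(i'-i)"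
      unfolding e by (simp add: div_mult2_eq power_Suc del: power_Suc2)
    also have "\<dots> = pre i' (r' div (2*h)) div 2^(i'-i)" by simp
    also have "\<dots> = pre i (r' div (2*h) div (2*h)^(i'-i))" using Suc.IH[OF ii] .
    also have "\<dots> = pre i (r' div (2*h)^(Suc i' - i))" unfolding e
      by (simp add: div_mult2_eq power_Suc del: power_Suc2)
    finally show ?thesis .
  qed
qed

lemma S_sub:
  assumes "i \<le> i'" "i' \<le> k" "r' div (2*h)^(i'-i) = r"
  shows "S i' r' \<subseteq> S i r"
proof
  fix x assume "x \<in> S i' r'"
  then have x: "x < 2^k" "x div 2^(k-i') = pre i' r'" unfolding S_def by auto
  have "k - i = (k - i') + (i' - i)" using assms by simp
  then have "x div 2^(k-i) = x div 2^(k-i') div 2^(i'-i)" by (simp add: power_add div_mult2_eq)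
  also have "\<dots> = pre i r" using x(2) pre_div[OF assms(1)] assms(3) by simp
  finally show "x \<in> S i r" using x unfolding S_def by auto
qed

end

context inst begin

definition sz :: "nat \<Rightarrow> real" where
  "sz i = (if i < k then (1 / real h)^(k-i) else 1/2)"

definition hb :: "nat \<Rightarrow> nat \<Rightarrow> nat \<Rightarrow> nat" where
  "hb t i r = 1 - ((t - (a i r + c i)) div L (Suc i)) mod 2"

definition sig :: "nat \<Rightarrow> nat \<times> nat \<times> nat \<Rightarrow> nat" where
  "sig t J = (case J of (i,r,q) \<Rightarrow> if i < k then pre i r * 2^(k-i) + hb t i r * 2^(k - Suc i) + q div h^(k-i)
       else pre i r)"

lemma hb_le: "hb t i r \<le> 1" unfolding hb_def by simp

lemma sig_facts:
  assumes "i < k" "q < c i"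
  shows "sig t (i,r,q) \<in> S i r" "(sig t (i,r,q) div 2^(k - Suc i)) mod 2 = hb t i r"
    "sig t (i,r,q) = pre i r * 2^(k-i) + hb t i r * 2^(k - Suc i) + q div h^(k-i)"
proof -
  define Q :: nat where "Q = 2^(k - Suc i)"
  define H :: nat where "H = h^(k-i)"
  define p where "p = pre i r"
  define b where "b = hb t i r"
  define z where "z = q div H"
  have Qpos: "0 < Q" unfolding Q_def by simp
  have Hpos: "0 < H" unfolding H_def using h2 by simp
  have e: "k - i = Suc (k - Suc i)" using assms by simp
  have P: "2^(k-i) = 2 * Q" unfolding Q_def e by simp
  have ci: "c i = Q * H" unfolding c_def Q_def H_def using assms(1) by (simp add: Suc_diff_Suc)
  have zQ: "z < Q" unfolding z_def using assms(2) ci Hpos by (simp add: div_less_iff_less_mult)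
  have b1: "b \<le> 1" unfolding b_def by (rule hb_le)
  have x: "sig t (i,r,q) = p * (2*Q) + b * Q + z"
    unfolding sig_def p_def b_def z_def Q_def H_def using assms(1) P Q_def by simp
  then show "sig t (i,r,q) = pre i r * 2^(k-i) + hb t i r * 2^(k - Suc i) + q div h^(k-i)"
    unfolding p_def b_def z_def Q_def H_def P by simp
  have "b * Q \<le> 1 * Q" using b1 by (rule mult_le_mono1)
  then have "b * Q + z < 2 * Q" using zQ by linarith
  then show "sig t (i,r,q) \<in> S i r" unfolding S_interval[OF less_imp_le[OF assms(1)]] x P p_def
    by (simp add: algebra_simps)
  have "sig t (i,r,q) div Q = 2 * p + b"
  proof -
    have "p * (2*Q) + b * Q + z = (2*p + b) * Q + z" by (simp add: algebra_simps)
    then show ?thesis unfolding x using zQ Qpos by simp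
  qed
  then show "(sig t (i,r,q) div 2^(k - Suc i)) mod 2 = hb t i r"
    unfolding Q_def[symmetric] b_def[symmetric] using b1 by auto
qed

lemma sig_in_S:
  assumes "(i,r,q) \<in> JS"
  shows "sig t (i,r,q) \<in> S i r"
proof (cases "i < k")
  case True then show ?thesis using sig_facts assms unfolding JS_def by auto
next
  case False then have "i = k" using assms unfolding JS_def by auto
  then show ?thesis using S_leaf[of r] by (simp add: sig_def)
qed

lemma same_node:
  assumes J1: "(i1,r1,q1) \<in> JS" and J2: "(i2,r2,q2) \<in> JS"
    and a1: "act t (i1,r1,q1)" and a2: "act t (i2,r2,q2)"
    and eq: "sig t (i1,r1,q1) = sig t (i2,r2,q2)" and le: "i1 \<le> i2"
  shows "i1 = i2 \<and> r1 = r2"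
proof -
  have j1: "i1 \<le> k" "r1 < (2*h)^i1" "q1 < c i1" using J1 unfolding JS_def by auto
  have j2: "i2 \<le> k" "r2 < (2*h)^i2" "q2 < c i2" using J2 unfolding JS_def by auto
  have t1: "t \<in> {a i1 r1 ..< a i1 r1 + L i1}" using act_I[OF a1 j1(3,1)] .
  have t2: "t \<in> {a i2 r2 ..< a i2 r2 + L i2}" using act_I[OF a2 j2(3,1)] .
  have cmp: "r2 div (2*h)^(i2-i1) = r1" by (rule comparable[OF le j2(1) j1(2) j2(2) t1 t2])
  show ?thesis
  proof (cases "i1 = i2")
    case True then show ?thesis using cmp by simp
  next
    case False
    then have lt: "i1 < i2" using le by simp
    then have ik: "i1 < k" using j2 by simp
    define j where "j = (r2 div (2*h)^(i2 - Suc i1)) mod (2*h)"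
    have jd: "j < 2*h" unfolding j_def using dpos by simp
    have "i2 - i1 = Suc (i2 - Suc i1)" using lt by simp
    then have "r2 div (2*h)^(i2-i1) = r2 div (2*h)^(i2 - Suc i1) div (2*h)"
      by (simp only: div_pow_Suc)
    then have ch: "r2 div (2*h)^(i2 - Suc i1) = r1*(2*h) + j"
      unfolding j_def using cmp by (metis mult.commute div_mult_mod_eq)
    have Isub: "{a i2 r2 ..< a i2 r2 + L i2} \<subseteq> {a (Suc i1) (r1*(2*h)+j) ..< a (Suc i1) (r1*(2*h)+j) + L (Suc i1)}"
      by (rule I_sub) (use lt j2 ch in auto)
    then have Isub': "{a i2 r2 ..< a i2 r2 + L i2} \<subseteq> {a i1 r1 + c i1 + j * L (Suc i1) ..< a i1 r1 + c i1 + j * L (Suc i1) + L (Suc i1)}"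
      by (simp only: a_child[OF jd])
    have "t \<in> {a i1 r1 + c i1 + j * L (Suc i1) ..< a i1 r1 + c i1 + j * L (Suc i1) + L (Suc i1)}"
      using t2 Isub' by blast
    then have "(t - (a i1 r1 + c i1)) div L (Suc i1) = j"
      using L_pos[of "Suc i1"] ik by (auto simp: div_iff)
    then have hbv: "hb t i1 r1 = 1 - j mod 2" unfolding hb_def by simp
    have x1: "(sig t (i1,r1,q1) div 2^(k - Suc i1)) mod 2 = 1 - j mod 2"
      using sig_facts(2)[OF ik j1(3)] hbv by simp
    have "sig t (i2,r2,q2) \<in> S i2 r2" using sig_in_S[OF J2] .
    also have "S i2 r2 \<subseteq> S (Suc i1) (r1*(2*h)+j)"
      by (rule S_sub) (use lt j2 ch in auto)
    finally have "(sig t (i2,r2,q2) div 2^(k - Suc i1)) mod 2 = j mod 2"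
      using S_half[OF ik jd] by auto
    then show ?thesis using x1 eq by (cases "j mod 2 = 0") auto
  qed
qed

lemma same_node':
  assumes "J1 \<in> JS" "J2 \<in> JS" "act t J1" "act t J2" "sig t J1 = sig t J2"
  shows "fst J1 = fst J2 \<and> fst (snd J1) = fst (snd J2)"
proof -
  obtain i1 r1 q1 where e1: "J1 = (i1,r1,q1)" by (cases J1) auto
  obtain i2 r2 q2 where e2: "J2 = (i2,r2,q2)" by (cases J2) auto
  show ?thesis
  proof (cases "i1 \<le> i2")
    case True then show ?thesis using same_node[of i1 r1 q1 i2 r2 q2 t] assms e1 e2 by auto
  next
    case False then show ?thesis using same_node[of i2 r2 q2 i1 r1 q1 t] assms e1 e2 by auto
  qed
qed

lemma load_le1:
  "(\<Sum>J\<in>{J\<in>JS. act t J \<and> sig t J = x}. sz (fst J)) \<le> 1"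
proof (cases "{J\<in>JS. act t J \<and> sig t J = x} = {}")
  case True then show ?thesis unfolding True by simp
next
  case False
  then obtain i r q0 where J0: "(i,r,q0) \<in> JS" "act t (i,r,q0)" "sig t (i,r,q0) = x" by auto
  have fin: "finite {J\<in>JS. act t J \<and> sig t J = x}" using finite_JS by simp
  have node: "\<And>J. J \<in> {J\<in>JS. act t J \<and> sig t J = x} \<Longrightarrow> fst J = i \<and> fst (snd J) = r"
  proof -
    fix J assume "J \<in> {J\<in>JS. act t J \<and> sig t J = x}"
    then have "J \<in> JS" "act t J" "sig t J = sig t (i,r,q0)" using J0 by auto
    from same_node'[OF this(1) J0(1) this(2) J0(2) this(3)] show "fst J = i \<and> fst (snd J) = r" by simp
  qed
  have ik: "i \<le> k" using J0 unfolding JS_def by auto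
  show ?thesis
  proof (cases "i < k")
    case False
    then have "i = k" using ik by simp
    have "{J\<in>JS. act t J \<and> sig t J = x} \<subseteq> {(k,r,0)}"
    proof
      fix J assume J: "J \<in> {J\<in>JS. act t J \<and> sig t J = x}"
      obtain i' r' q where Jq: "J = (i',r',q)" by (cases J) auto
      have "i' = k" "r' = r" using node[OF J] \<open>i = k\<close> Jq by auto
      moreover have "q < c i'" using J Jq unfolding JS_def by auto
      ultimately show "J \<in> {(k,r,0)}" using c_k Jq by simp
    qed
    then have "card {J\<in>JS. act t J \<and> sig t J = x} \<le> card {(k,r,0::nat)}"
      by (intro card_mono) auto
    then have "card {J\<in>JS. act t J \<and> sig t J = x} \<le> 1" by simp
    moreover have "\<And>J. J \<in> {J\<in>JS. act t J \<and> sig t J = x} \<Longrightarrow> sz (fst J) = 1/2"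
      using node \<open>i = k\<close> by (simp add: sz_def)
    then have "(\<Sum>J\<in>{J\<in>JS. act t J \<and> sig t J = x}. sz (fst J)) = (\<Sum>J\<in>{J\<in>JS. act t J \<and> sig t J = x}. 1/2)"
      by (rule sum.cong[OF refl])
    then have "(\<Sum>J\<in>{J\<in>JS. act t J \<and> sig t J = x}. sz (fst J)) = real (card {J\<in>JS. act t J \<and> sig t J = x}) * (1/2)"
      by simp
    ultimately show ?thesis by simp
  next
    case True
    define H where "H = h^(k-i)"
    define z where "z = q0 div H"
    have Hpos: "0 < H" unfolding H_def using h2 by simp
    have sub: "{J\<in>JS. act t J \<and> sig t J = x} \<subseteq> (\<lambda>q. (i,r,q)) ` {z*H ..< z*H + H}"
    proof
      fix J assume J: "J \<in> {J\<in>JS. act t J \<and> sig t J = x}"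
      obtain i' r' q where Jq0: "J = (i',r',q)" by (cases J) auto
      then have Jq: "J = (i,r,q)" using node[OF J] by simp
      have qc: "q < c i" "q0 < c i" using J J0 Jq unfolding JS_def by auto
      have "sig t (i,r,q) = sig t (i,r,q0)" using J J0 Jq by simp
      then have "q div H = z" unfolding z_def H_def using sig_facts(3)[OF True qc(1)] sig_facts(3)[OF True qc(2)]
        by simp
      then have "q \<in> {z*H ..< z*H + H}" using div_iff[OF Hpos] by (simp add: mult.commute)
      then show "J \<in> (\<lambda>q. (i,r,q)) ` {z*H ..< z*H + H}" using Jq by auto
    qed
    have "card {J\<in>JS. act t J \<and> sig t J = x} \<le> card ((\<lambda>q. (i,r,q)) ` {z*H ..< z*H + H})"
      by (rule card_mono[OF _ sub]) simp
    also have "\<dots> \<le> H" using card_image_le[of "{z*H ..< z*H + H}" "\<lambda>q. (i,r,q)"] by simp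
    finally have cH: "card {J\<in>JS. act t J \<and> sig t J = x} \<le> H" .
    have szv: "\<And>J. J \<in> {J\<in>JS. act t J \<and> sig t J = x} \<Longrightarrow> sz (fst J) = 1 / real H"
      using node True unfolding sz_def H_def by (simp add: power_one_over)
    have "(\<Sum>J\<in>{J\<in>JS. act t J \<and> sig t J = x}. sz (fst J)) = card {J\<in>JS. act t J \<and> sig t J = x} * (1 / real H)"
      using szv by simp
    also have "\<dots> \<le> real H * (1 / real H)" using cH by (intro mult_right_mono) auto
    also have "\<dots> = 1" using Hpos by simp
    finally show ?thesis .
  qed
qed

end

context inst begin

definition g :: "nat \<Rightarrow> nat \<times> nat \<times> nat" where
  "g = (SOME f. bij_betw f {0..<card JS} JS)"

lemma bij_g: "bij_betw g {0..<card JS} JS"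
  using someI_ex[OF ex_bij_betw_nat_finite[OF finite_JS]] unfolding g_def .

lemma g_JS: "j < card JS \<Longrightarrow> g j \<in> JS"
  using bij_g by (auto simp: bij_betw_def)

lemma inj_g: "inj_on g {..<card JS}"
  using bij_g by (simp add: bij_betw_def atLeast0LessThan)

lemma img_g: "g ` {..<card JS} = JS"
  using bij_g by (simp add: bij_betw_def atLeast0LessThan)

definition pj :: "nat \<Rightarrow> real" where "pj j = sz (fst (g j))"
definition Aj :: "nat \<Rightarrow> nat set" where "Aj j = S (fst (g j)) (fst (snd (g j)))"
definition arr :: "nat \<Rightarrow> nat" where "arr j = arrT (g j)"
definition dep :: "nat \<Rightarrow> nat" where "dep j = depT (g j)"
definition MM :: "nat set" where "MM = {..<2^k}"

lemma active_iff: "active (card JS) arr dep t = {j. j < card JS \<and> act t (g j)}"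
  unfolding active_def act_def arr_def dep_def by auto

lemma arr_tm: "arr j = tm (g j, True)" unfolding arr_def tm_def by simp
lemma dep_tm: "dep j = tm (g j, False)" unfolding dep_def tm_def by simp

lemma in_root: "j < card JS \<Longrightarrow> (g j, b) \<in> Ev 0 0"
  using g_JS Ev_root by auto

lemma valid_ev: "valid_events (card JS) arr dep"
proof -
  have 1: "\<forall>j<card JS. arr j < dep j"
  proof (intro allI impI)
    fix j assume j: "j < card JS"
    obtain i r q where e: "g j = (i,r,q)" by (cases "g j") auto
    then have "i \<le> k" "q < c i" using g_JS[OF j] unfolding JS_def by auto
    then have "2 * c i \<le> L i" "1 \<le> c i" using L_ge c_pos by auto
    then show "arr j < dep j" unfolding arr_def dep_def e arrT_def depT_def using \<open>q < c i\<close> by simp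
  qed
  have inj: "\<And>j1 j2 b1 b2. j1 < card JS \<Longrightarrow> j2 < card JS \<Longrightarrow> tm (g j1, b1) = tm (g j2, b2) \<Longrightarrow> j1 = j2 \<and> b1 = b2"
  proof -
    fix j1 j2 b1 b2 assume j: "j1 < card JS" "j2 < card JS" "tm (g j1, b1) = tm (g j2, b2)"
    then have "(g j1, b1) = (g j2, b2)" using inj_root in_root by (meson inj_onD)
    then show "j1 = j2 \<and> b1 = b2" using inj_g j by (auto simp: inj_on_def)
  qed
  have 2: "inj_on arr {..<card JS}" unfolding inj_on_def arr_tm using inj by blast
  have 3: "inj_on dep {..<card JS}" unfolding inj_on_def dep_tm using inj by blast
  have 4: "arr ` {..<card JS} \<inter> dep ` {..<card JS} = {}"
  proof (rule ccontr)
    assume "arr ` {..<card JS} \<inter> dep ` {..<card JS} \<noteq> {}"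
    then obtain j1 j2 where "j1 < card JS" "j2 < card JS" "arr j1 = dep j2" by auto
    then show False using inj[of j1 j2 True False] unfolding arr_tm dep_tm by simp
  qed
  have "arr ` {..<card JS} \<union> dep ` {..<card JS} = tm ` Ev 0 0"
  proof -
    have "Ev 0 0 = (\<lambda>j. (g j, True)) ` {..<card JS} \<union> (\<lambda>j. (g j, False)) ` {..<card JS}"
    proof
      show "Ev 0 0 \<subseteq> (\<lambda>j. (g j, True)) ` {..<card JS} \<union> (\<lambda>j. (g j, False)) ` {..<card JS}"
      proof
        fix e assume "e \<in> Ev 0 0"
        then obtain J b where e: "e = (J,b)" "J \<in> JS" unfolding Ev_root by auto
        then obtain j where "j < card JS" "g j = J" using img_g by (metis imageE lessThan_iff)
        then show "e \<in> (\<lambda>j. (g j, True)) ` {..<card JS} \<union> (\<lambda>j. (g j, False)) ` {..<card JS}"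
          using e by (cases b) auto
      qed
      show "(\<lambda>j. (g j, True)) ` {..<card JS} \<union> (\<lambda>j. (g j, False)) ` {..<card JS} \<subseteq> Ev 0 0"
        using in_root by auto
    qed
    then show ?thesis unfolding arr_tm dep_tm by (simp add: image_Un image_image)
  qed
  also have "\<dots> = {1..2 * card JS}" using img_Ev[of 0 0] card_JS by auto
  finally show ?thesis unfolding valid_events_def using 1 2 3 4 by blast
qed

lemma admits: "admits_schedule MM pj Aj (active (card JS) arr dep t) 1"
  unfolding admits_schedule_def
proof (intro exI[of _ "\<lambda>j. sig t (g j)"] conjI ballI)
  fix j assume "j \<in> active (card JS) arr dep t"
  then have j: "j < card JS" using active_iff by auto
  obtain i r q where e: "g j = (i,r,q)" by (cases "g j") auto
  show "sig t (g j) \<in> Aj j" unfolding Aj_def e using sig_in_S g_JS[OF j] e by simp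
next
  fix x assume "x \<in> MM"
  let ?A = "{j \<in> active (card JS) arr dep t. sig t (g j) = x}"
  have sub: "?A \<subseteq> {..<card JS}" using active_iff by auto
  have "(\<Sum>j\<in>?A. pj j) = (\<Sum>J\<in>g ` ?A. sz (fst J))"
    unfolding pj_def by (rule sum.reindex[symmetric, unfolded comp_def]) (use inj_g sub inj_on_subset in blast)
  also have "g ` ?A = {J\<in>JS. act t J \<and> sig t J = x}"
  proof
    show "g ` ?A \<subseteq> {J\<in>JS. act t J \<and> sig t J = x}" using active_iff g_JS by auto
    show "{J\<in>JS. act t J \<and> sig t J = x} \<subseteq> g ` ?A"
    proof
      fix J assume J: "J \<in> {J\<in>JS. act t J \<and> sig t J = x}"
      then obtain j where "j < card JS" "g j = J" using img_g by (metis (no_types, lifting) imageE lessThan_iff mem_Collect_eq)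
      then show "J \<in> g ` ?A" using J active_iff by auto
    qed
  qed
  finally show "(\<Sum>j\<in>?A. pj j) \<le> 1" using load_le1 by simp
qed

lemma valid: "valid_instance MM (card JS) pj Aj arr dep 1"
  unfolding valid_instance_def
proof (intro conjI allI impI)
  show "finite MM" unfolding MM_def by auto
  have "(0::nat) \<in> MM" unfolding MM_def by simp
  then show "MM \<noteq> {}" by auto
  show "valid_events (card JS) arr dep" by (rule valid_ev)
  show "\<And>t. admits_schedule MM pj Aj (active (card JS) arr dep t) 1" by (rule admits)
  fix j assume j: "j < card JS"
  obtain i r q where e: "g j = (i,r,q)" by (cases "g j") auto
  have ik: "i \<le> k" using g_JS[OF j] e unfolding JS_def by auto
  show "0 < pj j" unfolding pj_def sz_def using h2 by simp
  show "Aj j \<subseteq> MM" unfolding Aj_def MM_def using S_sub_M by simp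
  show "Aj j \<noteq> {}" unfolding Aj_def e using S_ne[OF ik] by auto
qed

end


locale lb = inst +
  fixes x :: "nat \<Rightarrow> nat \<Rightarrow> nat \<Rightarrow> real" and \<alpha>0 :: real
  assumes mm: "maintains_makespan MM (card JS) pj Aj arr dep x (\<alpha>0 * 1)"
begin

definition ginv :: "nat \<times> nat \<times> nat \<Rightarrow> nat" where "ginv = inv_into {..<card JS} g"

lemma ginv: "J \<in> JS \<Longrightarrow> ginv J < card JS \<and> g (ginv J) = J"
  unfolding ginv_def using img_g inj_g
  by (metis bij_betw_imp_surj_on bij_betw_inv_into_right inj_on_imp_bij_betw inv_into_into lessThan_iff)

lemma ginv_g: "j < card JS \<Longrightarrow> ginv (g j) = j"
  unfolding ginv_def using inj_g by (simp add: inv_into_f_f)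

definition Y :: "nat \<Rightarrow> nat \<times> nat \<times> nat \<Rightarrow> nat \<Rightarrow> real" where "Y t J z = x t (ginv J) z"

lemma frac:
  assumes "J \<in> JS" "act t J" "t \<le> 2 * card JS"
  shows "\<forall>z. 0 \<le> Y t J z" "\<forall>z. z \<notin> S (fst J) (fst (snd J)) \<longrightarrow> Y t J z = 0" "(\<Sum>z\<in>MM. Y t J z) = 1"
proof -
  have fs: "frac_schedule MM Aj (active (card JS) arr dep t) (x t)" using mm assms(3)
    unfolding maintains_makespan_def by auto
  have "ginv J \<in> active (card JS) arr dep t" using ginv[OF assms(1)] assms(2) active_iff by auto
  then have f: "(\<forall>i. 0 \<le> x t (ginv J) i) \<and> (\<forall>i. i \<notin> Aj (ginv J) \<longrightarrow> x t (ginv J) i = 0) \<and> (\<Sum>i\<in>MM. x t (ginv J) i) = 1"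
    using fs unfolding frac_schedule_def by blast
  have "Aj (ginv J) = S (fst J) (fst (snd J))" unfolding Aj_def using ginv[OF assms(1)] by simp
  then show "\<forall>z. 0 \<le> Y t J z" "\<forall>z. z \<notin> S (fst J) (fst (snd J)) \<longrightarrow> Y t J z = 0" "(\<Sum>z\<in>MM. Y t J z) = 1"
    using f unfolding Y_def by auto
qed

lemma sumS:
  assumes "(i,r,q) \<in> JS" "act t (i,r,q)" "t \<le> 2 * card JS"
  shows "(\<Sum>z\<in>S i r. Y t (i,r,q) z) = 1"
proof -
  have "(\<Sum>z\<in>S i r. Y t (i,r,q) z) = (\<Sum>z\<in>MM. Y t (i,r,q) z)"
    by (rule sum.mono_neutral_left) (use frac[OF assms] S_sub_M in \<open>auto simp: MM_def\<close>)
  then show ?thesis using frac(3)[OF assms] by simp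
qed

definition anc :: "nat \<times> nat \<times> nat \<Rightarrow> nat \<Rightarrow> nat \<Rightarrow> bool" where
  "anc J i' r' \<longleftrightarrow> fst J < i' \<and> fst (snd J) = r' div (2*h)^(i' - fst J)"

definition AM :: "nat \<Rightarrow> nat \<Rightarrow> nat \<Rightarrow> nat set \<Rightarrow> real" where
  "AM t i r A = (\<Sum>J\<in>{J\<in>JS. anc J i r}. sz (fst J) * (\<Sum>z\<in>A. Y t J z))"

definition P :: "nat \<Rightarrow> nat \<Rightarrow> nat \<Rightarrow> real" where
  "P t i r = AM t i r (S i r) / 2^(k-i)"

definition tau :: "nat \<Rightarrow> real" where
  "tau i = \<alpha>0 - 1/2 - (real k - real i) / 2"

definition e :: "nat \<Rightarrow> nat \<Rightarrow> nat \<Rightarrow> real" where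
  "e t i r = P t i r - tau i"

lemma div_pow_Suc': "y div (2*h)^(Suc m) = y div (2*h) div (2*h)^m"
  by (simp only: power_Suc div_mult2_eq)

lemma anc_child:
  assumes "i < k" "j < 2*h" "r < (2*h)^i"
  shows "{J\<in>JS. anc J (Suc i) (r*(2*h)+j)} = {J\<in>JS. anc J i r} \<union> (\<lambda>q. (i,r,q)) ` {..<c i}"
proof (intro equalityI subsetI)
  fix J assume J: "J \<in> {J\<in>JS. anc J (Suc i) (r*(2*h)+j)}"
  obtain i'' r'' q where Je: "J = (i'',r'',q)" by (cases J) auto
  have a1: "i'' < Suc i" "r'' = (r*(2*h)+j) div (2*h)^(Suc i - i'')" using J Je unfolding anc_def by auto
  have q: "q < c i''" using J Je unfolding JS_def by auto
  show "J \<in> {J\<in>JS. anc J i r} \<union> (\<lambda>q. (i,r,q)) ` {..<c i}"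
  proof (cases "i'' = i")
    case True
    then have "r'' = r" using a1 assms(2) by simp
    then show ?thesis using True Je q by auto
  next
    case False
    then have lt: "i'' < i" using a1 by simp
    then have ee: "Suc i - i'' = Suc (i - i'')" by simp
    have "r'' = (r*(2*h)+j) div (2*h) div (2*h)^(i - i'')" using a1(2)
      unfolding ee div_pow_Suc' .
    then have "r'' = r div (2*h)^(i - i'')" using assms(2) by simp
    then show ?thesis using J Je lt unfolding anc_def by auto
  qed
next
  fix J assume J: "J \<in> {J\<in>JS. anc J i r} \<union> (\<lambda>q. (i,r,q)) ` {..<c i}"
  show "J \<in> {J\<in>JS. anc J (Suc i) (r*(2*h)+j)}"
  proof (cases "J \<in> (\<lambda>q. (i,r,q)) ` {..<c i}")
    case True
    then obtain q where "J = (i,r,q)" "q < c i" by auto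
    then show ?thesis using assms unfolding anc_def JS_def by auto
  next
    case False
    then have J1: "J \<in> JS" "anc J i r" using J by auto
    obtain i'' r'' q where Je: "J = (i'',r'',q)" by (cases J) auto
    have lt: "i'' < i" "r'' = r div (2*h)^(i - i'')" using J1 Je unfolding anc_def by auto
    have ee: "Suc i - i'' = Suc (i - i'')" using lt by simp
    have "(r*(2*h)+j) div (2*h)^(Suc i - i'') = (r*(2*h)+j) div (2*h) div (2*h)^(i - i'')"
      unfolding ee div_pow_Suc' ..
    also have "\<dots> = r div (2*h)^(i - i'')" using assms(2) by simp
    finally show ?thesis using J1 Je lt unfolding anc_def by auto
  qed
qed

lemma anc_own_disj: "{J\<in>JS. anc J i r} \<inter> (\<lambda>q. (i,r,q)) ` {..<c i} = {}"
  unfolding anc_def by auto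

lemma finite_anc: "finite {J\<in>JS. anc J i r}" using finite_JS by simp

lemma AM_child:
  assumes "i < k" "j < 2*h" "r < (2*h)^i"
  shows "AM t (Suc i) (r*(2*h)+j) A = AM t i r A + (\<Sum>q<c i. sz i * (\<Sum>z\<in>A. Y t (i,r,q) z))"
proof -
  have "AM t (Suc i) (r*(2*h)+j) A = AM t i r A + (\<Sum>J\<in>(\<lambda>q. (i,r,q)) ` {..<c i}. sz (fst J) * (\<Sum>z\<in>A. Y t J z))"
    unfolding AM_def anc_child[OF assms] by (rule sum.union_disjoint) (use finite_anc anc_own_disj in auto)
  also have "(\<Sum>J\<in>(\<lambda>q. (i,r,q)) ` {..<c i}. sz (fst J) * (\<Sum>z\<in>A. Y t J z)) = (\<Sum>q<c i. sz i * (\<Sum>z\<in>A. Y t (i,r,q) z))"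
    by (subst sum.reindex) (auto simp: inj_on_def)
  finally show ?thesis .
qed

lemma AM_Un:
  assumes "finite A" "finite B" "A \<inter> B = {}"
  shows "AM t i r (A \<union> B) = AM t i r A + AM t i r B"
  unfolding AM_def by (simp add: sum.union_disjoint[OF assms] distrib_left sum.distrib)

lemma AM_root: "AM t 0 r A = 0"
  unfolding AM_def anc_def by simp

lemma anc_act':
  assumes "J \<in> JS" "anc J i' r'" "i' \<le> k" "a i' r' \<le> s + 1" "s < a i' r' + L i'"
  shows "act s J"
proof -
  obtain i r q where Je: "J = (i,r,q)" by (cases J) auto
  have "i < i'" "r = r' div (2*h)^(i'-i)" "q < c i" using assms(1,2) Je unfolding anc_def JS_def by auto
  then show ?thesis using anc_act[of i i' q r' s] assms Je by simp
qed

lemma t_bound: "i \<le> k \<Longrightarrow> r < (2*h)^i \<Longrightarrow> a i r + L i \<le> 1 + 2 * card JS"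
  using a_range(2) card_JS by simp

lemma Y_nonneg: "J \<in> JS \<Longrightarrow> act t J \<Longrightarrow> t \<le> 2 * card JS \<Longrightarrow> 0 \<le> Y t J z"
  using frac(1) by blast

lemma leaf_e:
  assumes r: "r < (2*h)^k"
  shows "e (a k r) k r \<le> 0"
proof -
  define t where "t = a k r"
  define z0 where "z0 = pre k r"
  have tle: "t \<le> 2 * card JS" using t_bound[OF order.refl r] L_k unfolding t_def by simp
  have ms: "makespan MM pj (active (card JS) arr dep t) (x t) \<le> \<alpha>0"
    using mm tle unfolding maintains_makespan_def by auto
  have fs: "frac_schedule MM Aj (active (card JS) arr dep t) (x t)"
    using mm tle unfolding maintains_makespan_def by auto
  have z0M: "z0 \<in> MM" unfolding z0_def MM_def using pre_lt[of k r] by simp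
  have "frac_load pj (active (card JS) arr dep t) (x t) z0 \<le> makespan MM pj (active (card JS) arr dep t) (x t)"
    unfolding makespan_def by (rule Max_ge) (use z0M in \<open>auto simp: MM_def\<close>)
  with ms have fl: "frac_load pj (active (card JS) arr dep t) (x t) z0 \<le> \<alpha>0" by simp
  define B where "B = {J\<in>JS. anc J k r} \<union> {(k,r,0)}"
  have kJ: "(k,r,0) \<in> JS" unfolding JS_def using r c_pos[of k] by auto
  have BJS: "B \<subseteq> JS" unfolding B_def using kJ by auto
  have actB: "\<And>J. J \<in> B \<Longrightarrow> act t J"
  proof -
    fix J assume "J \<in> B"
    then consider "J \<in> JS" "anc J k r" | "J = (k,r,0)" unfolding B_def by auto
    then show "act t J"
    proof cases
      case 1 then show ?thesis using anc_act'[of J k r t] L_k unfolding t_def by simp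
    next
      case 2 then show ?thesis unfolding act_def arrT_def depT_def t_def using L_k c_k by simp
    qed
  qed
  have injB: "inj_on ginv B" using ginv BJS by (metis inj_onI subsetD)
  have subA: "ginv ` B \<subseteq> active (card JS) arr dep t"
  proof
    fix j assume "j \<in> ginv ` B"
    then obtain J where J: "J \<in> B" "j = ginv J" by auto
    have JJ: "J \<in> JS" using J(1) BJS by auto
    have "ginv J < card JS \<and> g (ginv J) = J" by (rule ginv[OF JJ])
    then have "j < card JS" "g j = J" using J(2) by auto
    then show "j \<in> active (card JS) arr dep t" using actB[OF J(1)] active_iff by auto
  qed
  have nn: "\<And>j. j \<in> active (card JS) arr dep t \<Longrightarrow> 0 \<le> pj j * x t j z0"
  proof -
    fix j assume j: "j \<in> active (card JS) arr dep t"
    then have "0 \<le> x t j z0" using fs unfolding frac_schedule_def by blast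
    moreover have "0 \<le> pj j" unfolding pj_def sz_def by simp
    ultimately show "0 \<le> pj j * x t j z0" by simp
  qed
  have finA: "finite (active (card JS) arr dep t)" unfolding active_def by simp
  have "(\<Sum>j\<in>ginv ` B. pj j * x t j z0) \<le> frac_load pj (active (card JS) arr dep t) (x t) z0"
    unfolding frac_load_def by (rule sum_mono2[OF finA subA]) (auto intro: nn)
  moreover have "(\<Sum>j\<in>ginv ` B. pj j * x t j z0) = (\<Sum>J\<in>B. sz (fst J) * Y t J z0)"
    by (subst sum.reindex[OF injB]) (use ginv BJS in \<open>auto simp: pj_def Y_def intro!: sum.cong\<close>)
  moreover have "(\<Sum>J\<in>B. sz (fst J) * Y t J z0) = AM t k r {z0} + sz k * Y t (k,r,0) z0"
    unfolding B_def AM_def by (subst sum.union_disjoint) (use finite_anc in \<open>auto simp: anc_def\<close>)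
  moreover have "Y t (k,r,0) z0 = 1" using sumS[OF kJ actB[of "(k,r,0)"] tle] S_leaf[of r]
    unfolding B_def z0_def by simp
  ultimately have "AM t k r {z0} + 1/2 \<le> \<alpha>0" using fl by (simp add: sz_def)
  then show ?thesis unfolding e_def P_def tau_def S_leaf z0_def t_def by simp
qed

lemma csz: "i < k \<Longrightarrow> real (c i) * sz i = 2^(k - Suc i)"
proof -
  assume ik: "i < k"
  have "real (c i) = 2^(k - Suc i) * real h^(k-i)" unfolding c_def using ik by (simp add: Suc_diff_Suc)
  moreover have "real h^(k-i) * (1/real h)^(k-i) = 1" using h2 by (simp add: power_one_over)
  ultimately show ?thesis unfolding sz_def using ik by simp
qed

lemma pair_e:
  assumes ik: "i < k" and r: "r < (2*h)^i" and p: "p < h"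
  defines "t \<equiv> a i r + c i + (2*p+1) * L (Suc i) - 1"
  shows "e t (Suc i) (r*(2*h)+2*p) + e t (Suc i) (r*(2*h)+(2*p+1)) = 2 * e t i r"
proof -
  have j0: "2*p < 2*h" and j1: "2*p+1 < 2*h" using p by auto
  have LL: "L i = 2 * c i + 2*h * L (Suc i)" using L_rec[OF ik] .
  have L2: "2 \<le> L (Suc i)" using L_pos ik by simp
  have "(2*p+1) * L (Suc i) + L (Suc i) \<le> 2*h * L (Suc i)"
  proof -
    have "2*p+2 \<le> 2*h" using p by simp
    then have "(2*p+2)*L(Suc i) \<le> 2*h*L(Suc i)" by (rule mult_le_mono1)
    then show ?thesis by (simp add: algebra_simps)
  qed
  then have tlt: "t < a i r + L i - c i" unfolding t_def using LL L2 by simp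
  have tge: "a i r + c i \<le> t + 1" unfolding t_def using L2 by simp
  have tle: "t \<le> 2 * card JS" using t_bound[of i r] ik r tlt by simp
  have own: "\<And>q. q < c i \<Longrightarrow> (\<Sum>z\<in>S i r. Y t (i,r,q) z) = 1"
  proof -
    fix q assume q: "q < c i"
    have "(i,r,q) \<in> JS" unfolding JS_def using ik r q by auto
    moreover have "act t (i,r,q)" using own_act[OF q tge tlt] .
    ultimately show "(\<Sum>z\<in>S i r. Y t (i,r,q) z) = 1" using sumS tle by blast
  qed
  define S0 where "S0 = S (Suc i) (r*(2*h)+2*p)"
  define S1 where "S1 = S (Suc i) (r*(2*h)+(2*p+1))"
  have S0e: "S0 = {z \<in> S i r. (z div 2^(k - Suc i)) mod 2 = 0}" unfolding S0_def S_half[OF ik j0] by simp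
  have S1e: "S1 = {z \<in> S i r. (z div 2^(k - Suc i)) mod 2 = 1}" unfolding S1_def S_half[OF ik j1] by simp
  have SU: "S i r = S0 \<union> S1" "S0 \<inter> S1 = {}" unfolding S0e S1e by auto
  have fin: "finite S0" "finite S1" unfolding S0_def S1_def by (rule finite_S)+
  have A0: "AM t (Suc i) (r*(2*h)+2*p) S0 = AM t i r S0 + (\<Sum>q<c i. sz i * (\<Sum>z\<in>S0. Y t (i,r,q) z))"
    by (rule AM_child[OF ik j0 r])
  have A1: "AM t (Suc i) (r*(2*h)+(2*p+1)) S1 = AM t i r S1 + (\<Sum>q<c i. sz i * (\<Sum>z\<in>S1. Y t (i,r,q) z))"
    by (rule AM_child[OF ik j1 r])
  have "(\<Sum>q<c i. sz i * (\<Sum>z\<in>S0. Y t (i,r,q) z)) + (\<Sum>q<c i. sz i * (\<Sum>z\<in>S1. Y t (i,r,q) z))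
      = (\<Sum>q<c i. sz i * (\<Sum>z\<in>S i r. Y t (i,r,q) z))"
    unfolding SU(1) by (simp add: sum.union_disjoint[OF fin SU(2)] distrib_left sum.distrib)
  also have "\<dots> = real (c i) * sz i" using own by simp
  also have "\<dots> = 2^(k - Suc i)" by (rule csz[OF ik])
  finally have own2: "(\<Sum>q<c i. sz i * (\<Sum>z\<in>S0. Y t (i,r,q) z)) + (\<Sum>q<c i. sz i * (\<Sum>z\<in>S1. Y t (i,r,q) z))
      = 2^(k - Suc i)" .
  have sumAM: "AM t (Suc i) (r*(2*h)+2*p) S0 + AM t (Suc i) (r*(2*h)+(2*p+1)) S1 = AM t i r (S i r) + 2^(k - Suc i)"
    using A0 A1 own2 AM_Un[OF fin SU(2), of t i r] SU(1) by simp
  have ee: "k - i = Suc (k - Suc i)" using ik by simp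
  have pw: "(2::real)^(k-i) = 2 * 2^(k - Suc i)" by (simp only: ee power_Suc)
  have "P t (Suc i) (r*(2*h)+2*p) + P t (Suc i) (r*(2*h)+(2*p+1)) = 2 * P t i r + 1"
    unfolding P_def S0_def[symmetric] S1_def[symmetric] pw
    using sumAM by (simp add: field_simps)
  moreover have "tau (Suc i) = tau i + 1/2" unfolding tau_def by (simp add: field_simps)
  ultimately show ?thesis unfolding e_def by simp
qed

end


lemma tele:
  fixes f :: "nat \<Rightarrow> real"
  shows "\<bar>f (t1 + m) - f t1\<bar> \<le> (\<Sum>s\<in>{Suc t1..t1 + m}. \<bar>f s - f (s - 1)\<bar>)"
proof (induction m)
  case 0 then show ?case by simp
next
  case (Suc m)
  have "{Suc t1..t1 + Suc m} = insert (t1 + Suc m) {Suc t1..t1 + m}" by auto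
  then have "(\<Sum>s\<in>{Suc t1..t1 + Suc m}. \<bar>f s - f (s - 1)\<bar>) = \<bar>f (t1 + Suc m) - f (t1 + m)\<bar> + (\<Sum>s\<in>{Suc t1..t1 + m}. \<bar>f s - f (s - 1)\<bar>)"
    by simp
  moreover have "\<bar>f (t1 + Suc m) - f t1\<bar> \<le> \<bar>f (t1 + Suc m) - f (t1 + m)\<bar> + \<bar>f (t1 + m) - f t1\<bar>" by simp
  ultimately show ?case using Suc.IH by simp
qed

lemma tele':
  fixes f :: "nat \<Rightarrow> real"
  assumes "t1 \<le> t2"
  shows "\<bar>f t2 - f t1\<bar> \<le> (\<Sum>s\<in>{Suc t1..t2}. \<bar>f s - f (s - 1)\<bar>)"
  using tele[of f t1 "t2 - t1"] assms by simp

lemma sum_pairs: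
  fixes f :: "nat \<Rightarrow> real"
  shows "(\<Sum>j<2*n. f j) = (\<Sum>p<n. f (2*p) + f (2*p+1))"
proof (induction n)
  case 0 then show ?case by simp
next
  case (Suc n)
  have "2 * Suc n = Suc (Suc (2*n))" by simp
  then show ?case using Suc by simp
qed

context lb begin

definition TV :: "nat \<Rightarrow> nat \<Rightarrow> real" where
  "TV i r = (\<Sum>s\<in>{a i r .. a i r + L i - 1}. \<bar>e s i r - e (s - 1) i r\<bar>)"

definition EE :: "nat \<Rightarrow> nat \<Rightarrow> real" where "EE i r = e (a i r - 1) i r"
definition XX :: "nat \<Rightarrow> nat \<Rightarrow> real" where "XX i r = e (a i r + L i - 1) i r"

lemma TV_bound:
  assumes "a i r - 1 \<le> t1" "t1 \<le> t2" "t2 \<le> a i r + L i - 1"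
  shows "\<bar>e t2 i r - e t1 i r\<bar> \<le> TV i r"
proof -
  have "\<bar>e t2 i r - e t1 i r\<bar> \<le> (\<Sum>s\<in>{Suc t1..t2}. \<bar>e s i r - e (s - 1) i r\<bar>)"
    using tele'[OF assms(2), of "\<lambda>s. e s i r"] by simp
  also have "\<dots> \<le> TV i r" unfolding TV_def
    by (rule sum_mono2) (use assms a_pos[of i r] in auto)
  finally show ?thesis .
qed

fun FF :: "nat \<Rightarrow> nat \<Rightarrow> nat \<Rightarrow> real" where
  "FF 0 i r = TV i r"
| "FF (Suc m) i r = TV i r + (\<Sum>j<2*h. FF m (Suc i) (r*(2*h)+j)) / (2*h)"

lemma F_claim: "i + m = k \<Longrightarrow> r < (2*h)^i \<Longrightarrow> EE i r \<le> FF m i r \<and> XX i r \<le> FF m i r"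
proof (induction m arbitrary: i r)
  case 0
  then have ik: "i = k" by simp
  have le: "e (a k r) k r \<le> 0" using leaf_e 0 ik by simp
  have b1: "\<bar>e (a k r) k r - e (a k r - 1) k r\<bar> \<le> TV k r"
    by (rule TV_bound) (use L_k in auto)
  have b2: "\<bar>e (a k r + L k - 1) k r - e (a k r) k r\<bar> \<le> TV k r"
    by (rule TV_bound) (use L_k in auto)
  have A: "EE k r \<le> TV k r" using b1 le unfolding EE_def abs_le_iff by linarith
  have B: "XX k r \<le> TV k r" using b2 le unfolding XX_def abs_le_iff by linarith
  show ?case using A B ik by simp
next
  case (Suc m)
  then have ik: "i < k" by simp
  have r: "r < (2*h)^i" using Suc by simp
  have LL: "L i = 2 * c i + 2*h * L (Suc i)" using L_rec[OF ik] .
  have L2: "2 \<le> L (Suc i)" using L_pos ik by simp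
  have hpos: "0 < h" using h2 by simp
  have key: "\<And>p. p < h \<Longrightarrow> 2 * EE i r - 2 * TV i r \<le> FF m (Suc i) (r*(2*h)+2*p) + FF m (Suc i) (r*(2*h)+(2*p+1))
                   \<and> 2 * XX i r - 2 * TV i r \<le> FF m (Suc i) (r*(2*h)+2*p) + FF m (Suc i) (r*(2*h)+(2*p+1))"
  proof -
    fix p assume p: "p < h"
    have j0: "2*p < 2*h" and j1: "2*p+1 < 2*h" using p by auto
    define t where "t = a i r + c i + (2*p+1) * L (Suc i) - 1"
    have ch0: "r*(2*h)+2*p < (2*h)^(Suc i)" and ch1: "r*(2*h)+(2*p+1) < (2*h)^(Suc i)"
    proof -
      have "r*(2*h)+(2*p+1) < (r+1)*(2*h)" using j1 by simp
      also have "\<dots> \<le> (2*h)^i * (2*h)" using r by (intro mult_right_mono) auto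
      finally show "r*(2*h)+(2*p+1) < (2*h)^(Suc i)" by (simp add: mult.commute)
      then show "r*(2*h)+2*p < (2*h)^(Suc i)" by simp
    qed
    have "i + 1 + m = k" using Suc by simp
    then have IH0: "XX (Suc i) (r*(2*h)+2*p) \<le> FF m (Suc i) (r*(2*h)+2*p)"
      and IH1: "EE (Suc i) (r*(2*h)+(2*p+1)) \<le> FF m (Suc i) (r*(2*h)+(2*p+1))"
      using Suc.IH[of "Suc i"] ch0 ch1 by auto
    have x0: "XX (Suc i) (r*(2*h)+2*p) = e t (Suc i) (r*(2*h)+2*p)"
      unfolding XX_def t_def a_child[OF j0] using L2 by (simp add: algebra_simps)
    have x1: "EE (Suc i) (r*(2*h)+(2*p+1)) = e t (Suc i) (r*(2*h)+(2*p+1))"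
      unfolding EE_def t_def a_child[OF j1] by simp
    have pe: "e t (Suc i) (r*(2*h)+2*p) + e t (Suc i) (r*(2*h)+(2*p+1)) = 2 * e t i r"
      unfolding t_def by (rule pair_e[OF ik r p])
    have "(2*p+1) * L (Suc i) \<le> 2*h * L (Suc i)" using j1 by (intro mult_le_mono1) simp
    then have tr: "a i r - 1 \<le> t" "t \<le> a i r + L i - 1" unfolding t_def using LL L2 by auto
    have b1: "\<bar>e t i r - e (a i r - 1) i r\<bar> \<le> TV i r" by (rule TV_bound) (use tr in auto)
    have b2: "\<bar>e (a i r + L i - 1) i r - e t i r\<bar> \<le> TV i r" by (rule TV_bound) (use tr in auto)
    show "2 * EE i r - 2 * TV i r \<le> FF m (Suc i) (r*(2*h)+2*p) + FF m (Suc i) (r*(2*h)+(2*p+1))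
                   \<and> 2 * XX i r - 2 * TV i r \<le> FF m (Suc i) (r*(2*h)+2*p) + FF m (Suc i) (r*(2*h)+(2*p+1))"
      using IH0 IH1 x0 x1 pe b1 b2 unfolding EE_def XX_def by linarith
  qed
  have sp: "(\<Sum>j<2*h. FF m (Suc i) (r*(2*h)+j)) = (\<Sum>p<h. FF m (Suc i) (r*(2*h)+2*p) + FF m (Suc i) (r*(2*h)+(2*p+1)))"
    by (rule sum_pairs)
  have "(\<Sum>p<h. 2 * EE i r - 2 * TV i r) \<le> (\<Sum>j<2*h. FF m (Suc i) (r*(2*h)+j))"
    unfolding sp by (rule sum_mono) (use key in auto)
  moreover have "(\<Sum>p<h. 2 * XX i r - 2 * TV i r) \<le> (\<Sum>j<2*h. FF m (Suc i) (r*(2*h)+j))"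
    unfolding sp by (rule sum_mono) (use key in auto)
  ultimately have s1: "real h * (2 * EE i r - 2 * TV i r) \<le> (\<Sum>j<2*h. FF m (Suc i) (r*(2*h)+j))"
     and s2: "real h * (2 * XX i r - 2 * TV i r) \<le> (\<Sum>j<2*h. FF m (Suc i) (r*(2*h)+j))" by auto
  have "EE i r - TV i r \<le> (\<Sum>j<2*h. FF m (Suc i) (r*(2*h)+j)) / (2*h)"
    using s1 hpos by (simp add: field_simps)
  moreover have "XX i r - TV i r \<le> (\<Sum>j<2*h. FF m (Suc i) (r*(2*h)+j)) / (2*h)"
    using s2 hpos by (simp add: field_simps)
  ultimately show ?case by simp
qed

lemma root_bound: "real k / 2 - \<alpha>0 + 1/2 \<le> FF k 0 0"
proof -
  have "EE 0 0 \<le> FF k 0 0" using F_claim[of 0 k 0] by simp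
  moreover have "EE 0 0 = real k / 2 - \<alpha>0 + 1/2"
    unfolding EE_def e_def P_def AM_root tau_def by (simp add: field_simps)
  ultimately show ?thesis by simp
qed

end


lemma sum_shift_add:
  fixes f :: "nat \<Rightarrow> real"
  shows "(\<Sum>r<a+b. f r) = (\<Sum>r<a. f r) + (\<Sum>j<b. f (a+j))"
  by (induction b) (simp_all add: add.assoc)

lemma sum_regroup:
  fixes f :: "nat \<Rightarrow> real"
  shows "(\<Sum>r<N. \<Sum>j<D. f (r*D + j)) = (\<Sum>r'<N*D. f r')"
proof (induction N)
  case 0 then show ?case by simp
next
  case (Suc N)
  have "(\<Sum>r'<Suc N * D. f r') = (\<Sum>r'<N*D + D. f r')" by (simp add: add.commute)
  also have "\<dots> = (\<Sum>r'<N*D. f r') + (\<Sum>j<D. f (N*D+j))" by (rule sum_shift_add)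
  finally show ?case using Suc by simp
qed

lemma half_abs_bound:
  fixes u v :: "nat \<Rightarrow> real"
  assumes "finite M" "A \<subseteq> M" "(\<Sum>z\<in>M. u z) = (\<Sum>z\<in>M. v z)"
  shows "\<bar>(\<Sum>z\<in>A. u z) - (\<Sum>z\<in>A. v z)\<bar> \<le> (\<Sum>z\<in>M. \<bar>u z - v z\<bar>) / 2"
proof -
  have fA: "finite A" using assms finite_subset by blast
  have fB: "finite (M - A)" using assms by simp
  have split: "\<And>w::nat\<Rightarrow>real. (\<Sum>z\<in>M. w z) = (\<Sum>z\<in>A. w z) + (\<Sum>z\<in>M - A. w z)"
    using sum.subset_diff[OF assms(2,1)] by (simp add: add.commute)
  have d: "(\<Sum>z\<in>A. u z - v z) = - (\<Sum>z\<in>M - A. u z - v z)"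
    using split[of "\<lambda>z. u z - v z"] assms(3) by (simp add: sum_subtractf)
  have a1: "\<bar>\<Sum>z\<in>A. u z - v z\<bar> \<le> (\<Sum>z\<in>A. \<bar>u z - v z\<bar>)" by (rule sum_abs)
  have a2: "\<bar>\<Sum>z\<in>M - A. u z - v z\<bar> \<le> (\<Sum>z\<in>M - A. \<bar>u z - v z\<bar>)" by (rule sum_abs)
  have a3: "\<bar>\<Sum>z\<in>A. u z - v z\<bar> = \<bar>\<Sum>z\<in>M - A. u z - v z\<bar>" using d by simp
  have a4: "(\<Sum>z\<in>A. u z) - (\<Sum>z\<in>A. v z) = (\<Sum>z\<in>A. u z - v z)" by (simp add: sum_subtractf)
  have "(\<Sum>z\<in>M. \<bar>u z - v z\<bar>) = (\<Sum>z\<in>A. \<bar>u z - v z\<bar>) + (\<Sum>z\<in>M - A. \<bar>u z - v z\<bar>)" by (rule split)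
  then show ?thesis unfolding a4 using a1 a2 a3 by linarith
qed

context lb begin

lemma TV_root: "TV 0 0 = 0"
  unfolding TV_def e_def P_def AM_root by simp

lemma FF_flat: "i + m = k \<Longrightarrow> (\<Sum>r<(2*h)^i. FF m i r) = (\<Sum>i'\<in>{i..k}. (\<Sum>r'<(2*h)^i'. TV i' r') / (2*h)^(i'-i))"
proof (induction m arbitrary: i)
  case 0 then show ?case by simp
next
  case (Suc m)
  then have ik: "i < k" by simp
  have hp: "0 < h" using h2 by simp
  have "(\<Sum>r<(2*h)^i. FF (Suc m) i r) = (\<Sum>r<(2*h)^i. TV i r) + (\<Sum>r<(2*h)^i. \<Sum>j<2*h. FF m (Suc i) (r*(2*h)+j)) / (2*h)"
    by (simp add: sum.distrib sum_divide_distrib)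
  also have "(\<Sum>r<(2*h)^i. \<Sum>j<2*h. FF m (Suc i) (r*(2*h)+j)) = (\<Sum>r'<(2*h)^(Suc i). FF m (Suc i) r')"
    using sum_regroup[where f="FF m (Suc i)" and N="(2*h)^i" and D="2*h"] by (simp only: power_Suc2)
  also have "\<dots> = (\<Sum>i'\<in>{Suc i..k}. (\<Sum>r'<(2*h)^i'. TV i' r') / (2*h)^(i'-Suc i))"
    using Suc.IH[of "Suc i"] Suc.prems by simp
  also have "(\<Sum>i'\<in>{Suc i..k}. (\<Sum>r'<(2*h)^i'. TV i' r') / (2*h)^(i'-Suc i)) / (2*h)
      = (\<Sum>i'\<in>{Suc i..k}. (\<Sum>r'<(2*h)^i'. TV i' r') / (2*h)^(i'-i))"
  proof -
    have "(\<Sum>i'\<in>{Suc i..k}. (\<Sum>r'<(2*h)^i'. TV i' r') / (2*h)^(i'-Suc i)) / (2*h)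
      = (\<Sum>i'\<in>{Suc i..k}. (\<Sum>r'<(2*h)^i'. TV i' r') / (2*h)^(i'-Suc i) / (2*h))"
      by (rule sum_divide_distrib[where f="\<lambda>i'. (\<Sum>r'<(2*h)^i'. TV i' r') / (2*h)^(i'-Suc i)"])
    also have "\<dots> = (\<Sum>i'\<in>{Suc i..k}. (\<Sum>r'<(2*h)^i'. TV i' r') / (2*h)^(i'-i))"
    proof (rule sum.cong[OF refl])
      fix i' assume "i' \<in> {Suc i..k}"
      then have "i' - i = Suc (i' - Suc i)" by auto
      then show "(\<Sum>r'<(2*h)^i'. TV i' r') / (2*h)^(i'-Suc i) / (2*h) = (\<Sum>r'<(2*h)^i'. TV i' r') / (2*h)^(i'-i)"
        by (simp add: power_Suc2 del: power_Suc)
    qed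
    finally show ?thesis .
  qed
  also have "(\<Sum>r<(2*h)^i. TV i r) + (\<Sum>i'\<in>{Suc i..k}. (\<Sum>r'<(2*h)^i'. TV i' r') / (2*h)^(i'-i))
      = (\<Sum>i'\<in>{i..k}. (\<Sum>r'<(2*h)^i'. TV i' r') / (2*h)^(i'-i))"
    using ik by (simp add: sum.atLeast_Suc_atMost[of i k])
  finally show ?case .
qed

lemma FF_root: "FF k 0 0 = (\<Sum>i'\<in>{1..k}. (\<Sum>r'<(2*h)^i'. TV i' r') / (2*h)^i')"
proof -
  have "FF k 0 0 = (\<Sum>i'\<in>{0..k}. (\<Sum>r'<(2*h)^i'. TV i' r') / (2*h)^i')"
    using FF_flat[of 0 k] by simp
  also have "\<dots> = (\<Sum>i'\<in>{1..k}. (\<Sum>r'<(2*h)^i'. TV i' r') / (2*h)^i')"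
    using TV_root by (simp add: sum.atLeast_Suc_atMost)
  finally show ?thesis .
qed

definition rho :: "nat \<Rightarrow> nat \<times> nat \<times> nat \<Rightarrow> real" where
  "rho s J = (\<Sum>z\<in>MM. \<bar>Y s J z - Y (s-1) J z\<bar>) / 2"

lemma rho_nonneg: "0 \<le> rho s J" unfolding rho_def by (simp add: sum_nonneg)

lemma TV_rec:
  assumes ik: "i' \<le> k" and r: "r' < (2*h)^i'"
  shows "TV i' r' \<le> (\<Sum>s\<in>{a i' r' .. a i' r' + L i' - 1}. \<Sum>J\<in>{J\<in>JS. anc J i' r'}. sz (fst J) / 2^(k-i') * rho s J)"
  unfolding TV_def
proof (rule sum_mono)
  fix s assume s: "s \<in> {a i' r' .. a i' r' + L i' - 1}"
  let ?X = "{J\<in>JS. anc J i' r'}"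
  let ?D = "\<lambda>J. (\<Sum>z\<in>S i' r'. Y s J z) - (\<Sum>z\<in>S i' r'. Y (s-1) J z)"
  have Lp: "2 \<le> L i'" using L_pos[OF ik] .
  have sle: "s \<le> 2 * card JS" using s t_bound[OF ik r] Lp by auto
  have each: "\<And>J. J \<in> ?X \<Longrightarrow> \<bar>?D J\<bar> \<le> rho s J"
  proof -
    fix J assume J: "J \<in> ?X"
    have a1: "act s J" by (rule anc_act'[of J i' r']) (use J s Lp ik in auto)
    have a2: "act (s-1) J" by (rule anc_act'[of J i' r']) (use J s Lp ik in auto)
    have JJ: "J \<in> JS" using J by simp
    have s1: "s - 1 \<le> 2 * card JS" using sle by simp
    have "(\<Sum>z\<in>MM. Y s J z) = (\<Sum>z\<in>MM. Y (s-1) J z)"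
      using frac(3)[OF JJ a1 sle] frac(3)[OF JJ a2 s1] by simp
    moreover have "finite MM" unfolding MM_def by simp
    moreover have "S i' r' \<subseteq> MM" unfolding MM_def by (rule S_sub_M)
    ultimately have "\<bar>?D J\<bar> \<le> (\<Sum>z\<in>MM. \<bar>Y s J z - Y (s-1) J z\<bar>) / 2"
      using half_abs_bound[of MM "S i' r'" "Y s J" "Y (s-1) J"] by simp
    then show "\<bar>?D J\<bar> \<le> rho s J" unfolding rho_def .
  qed
  have d: "AM s i' r' (S i' r') - AM (s-1) i' r' (S i' r') = (\<Sum>J\<in>?X. sz (fst J) * ?D J)"
    unfolding AM_def by (simp only: sum_subtractf right_diff_distrib)
  have b: "\<bar>\<Sum>J\<in>?X. sz (fst J) * ?D J\<bar> \<le> (\<Sum>J\<in>?X. sz (fst J) * rho s J)"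
  proof -
    have "\<bar>\<Sum>J\<in>?X. sz (fst J) * ?D J\<bar> \<le> (\<Sum>J\<in>?X. \<bar>sz (fst J) * ?D J\<bar>)" by (rule sum_abs)
    also have "\<dots> \<le> (\<Sum>J\<in>?X. sz (fst J) * rho s J)"
    proof (rule sum_mono)
      fix J assume J: "J \<in> ?X"
      have z: "0 \<le> sz (fst J)" unfolding sz_def by simp
      have "\<bar>sz (fst J) * ?D J\<bar> = sz (fst J) * \<bar>?D J\<bar>" using z by (simp add: abs_mult)
      also have "\<dots> \<le> sz (fst J) * rho s J" using each[OF J] z by (rule mult_left_mono)
      finally show "\<bar>sz (fst J) * ?D J\<bar> \<le> sz (fst J) * rho s J" .
    qed
    finally show ?thesis .
  qed
  have pp: "(0::real) < 2^(k-i')" by simp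
  have "\<bar>e s i' r' - e (s - 1) i' r'\<bar> = \<bar>AM s i' r' (S i' r') - AM (s-1) i' r' (S i' r')\<bar> / 2^(k-i')"
    unfolding e_def P_def by (simp add: diff_divide_distrib[symmetric])
  also have "\<dots> \<le> (\<Sum>J\<in>?X. sz (fst J) * rho s J) / 2^(k-i')"
    unfolding d using b pp by (simp add: divide_right_mono)
  also have "\<dots> = (\<Sum>J\<in>?X. sz (fst J) / 2^(k-i') * rho s J)"
    by (simp add: sum_divide_distrib)
  finally show "\<bar>e s i' r' - e (s - 1) i' r'\<bar> \<le> (\<Sum>J\<in>?X. sz (fst J) / 2^(k-i') * rho s J)" .
qed

lemma step_eq:
  "step_recourse MM (active (card JS) arr dep (s-1)) (active (card JS) arr dep s) (x (s-1)) (x s)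
    = (\<Sum>J\<in>{J\<in>JS. act (s-1) J \<and> act s J}. rho s J)"
proof -
  let ?X = "{J\<in>JS. act (s-1) J \<and> act s J}"
  have gg: "\<And>J. J \<in> ?X \<Longrightarrow> ginv J < card JS \<and> g (ginv J) = J"
  proof -
    fix J assume "J \<in> ?X"
    then have "J \<in> JS" by simp
    then show "ginv J < card JS \<and> g (ginv J) = J" by (rule ginv)
  qed
  have inj: "inj_on ginv ?X"
  proof (rule inj_onI)
    fix J1 J2 assume J: "J1 \<in> ?X" "J2 \<in> ?X" "ginv J1 = ginv J2"
    have "J1 = g (ginv J1)" using gg[OF J(1)] by simp
    also have "\<dots> = g (ginv J2)" using J(3) by simp
    also have "\<dots> = J2" using gg[OF J(2)] by simp
    finally show "J1 = J2" .
  qed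
  have img: "active (card JS) arr dep (s-1) \<inter> active (card JS) arr dep s = ginv ` ?X"
  proof (intro equalityI subsetI)
    fix j assume "j \<in> ginv ` ?X"
    then obtain J where J: "J \<in> ?X" "j = ginv J" by blast
    have "j < card JS" "g j = J" using gg[OF J(1)] J(2) by simp_all
    moreover have "act (s-1) J" "act s J" using J(1) by simp_all
    ultimately show "j \<in> active (card JS) arr dep (s-1) \<inter> active (card JS) arr dep s"
      unfolding active_iff by simp
  next
    fix j assume "j \<in> active (card JS) arr dep (s-1) \<inter> active (card JS) arr dep s"
    then have j: "j < card JS" "act (s-1) (g j)" "act s (g j)" unfolding active_iff by simp_all
    have "g j \<in> JS" using g_JS[OF j(1)] .
    then have "g j \<in> ?X" using j by simp
    have "j = ginv (g j)" using ginv_g[OF j(1)] by simp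
    then show "j \<in> ginv ` ?X" using \<open>g j \<in> ?X\<close> by (rule image_eqI)
  qed
  show ?thesis
    unfolding step_recourse_def rho_def Y_def img
    by (rule sum.reindex_cong[OF inj refl]) simp
qed

end


lemma geom2:
  fixes q :: real
  assumes "0 \<le> q" "q \<le> 1/2"
  shows "(\<Sum>m<M. q^m) \<le> 2"
proof -
  have "(\<Sum>m<M. q^m) = (1 - q^M) / (1 - q)" using assms sum_gp_strict[of q M] by simp
  also have "\<dots> \<le> 1 / (1 - q)"
    using assms by (intro divide_right_mono) (auto simp: zero_le_power)
  also have "\<dots> \<le> 2" using assms by (simp add: field_simps)
  finally show ?thesis .
qed

context lb begin

definition wp :: "nat \<Rightarrow> real" where "wp i' = real h^(k - i' + 1) / 2"

definition ind :: "nat \<Rightarrow> nat \<Rightarrow> nat \<Rightarrow> nat \<times> nat \<times> nat \<Rightarrow> bool" where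
  "ind i' r' s J \<longleftrightarrow> s \<in> {a i' r' .. a i' r' + L i' - 1} \<and> anc J i' r'"

definition om :: "nat \<Rightarrow> nat \<times> nat \<times> nat \<Rightarrow> real" where
  "om s J = (\<Sum>i'\<in>{1..k}. \<Sum>r'<(2*h)^i'. if ind i' r' s J then wp i' * sz (fst J) else 0)"

lemma wp_nonneg: "0 \<le> wp i'" unfolding wp_def by simp
lemma sz_nonneg: "0 \<le> sz i" unfolding sz_def by simp

lemma om_nonneg: "0 \<le> om s J"
  unfolding om_def by (intro sum_nonneg) (simp add: wp_nonneg sz_nonneg)

lemma om_act:
  assumes "J \<in> JS" "om s J \<noteq> 0"
  shows "act (s-1) J \<and> act s J"
proof -
  obtain i' r' where ir: "i' \<in> {1..k}" "ind i' r' s J"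
  proof (rule ccontr)
    assume "\<not> thesis"
    then have "\<And>i' r'. i' \<in> {1..k} \<Longrightarrow> \<not> ind i' r' s J" using that by blast
    then have "om s J = 0" unfolding om_def by simp
    then show False using assms by simp
  qed
  have ik: "i' \<le> k" using ir by simp
  have Lp: "2 \<le> L i'" using L_pos[OF ik] .
  have s: "a i' r' \<le> s" "s \<le> a i' r' + L i' - 1" "anc J i' r'" using ir unfolding ind_def by auto
  have "act s J" by (rule anc_act'[OF assms(1) s(3) ik]) (use s Lp in auto)
  moreover have "act (s-1) J" by (rule anc_act'[OF assms(1) s(3) ik]) (use s Lp in auto)
  ultimately show ?thesis by simp
qed

lemma inner_le:
  assumes J: "(i,r,q) \<in> JS" and ik: "i' \<le> k"
  shows "(\<Sum>r'<(2*h)^i'. if ind i' r' s (i,r,q) then wp i' * sz i else 0) \<le> (if i < i' then wp i' * sz i else 0)"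
proof (cases "i < i'")
  case False
  then have "\<And>r'. \<not> ind i' r' s (i,r,q)" unfolding ind_def anc_def by auto
  then show ?thesis using False by simp
next
  case True
  let ?R = "{r'. r' < (2*h)^i' \<and> ind i' r' s (i,r,q)}"
  have uniq: "\<And>r1 r2. r1 \<in> ?R \<Longrightarrow> r2 \<in> ?R \<Longrightarrow> r1 = r2"
  proof -
    fix r1 r2 assume r1: "r1 \<in> ?R" and r2: "r2 \<in> ?R"
    show "r1 = r2"
    proof (rule ccontr)
      assume ne: "r1 \<noteq> r2"
      have "s \<in> {a i' r1 ..< a i' r1 + L i'}" "s \<in> {a i' r2 ..< a i' r2 + L i'}"
        using r1 r2 L_pos[OF ik] unfolding ind_def by auto
      then show False using I_disj[OF ik _ _ ne] r1 r2 by auto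
    qed
  qed
  have card1: "card ?R \<le> 1"
  proof (cases "?R = {}")
    case True then show ?thesis unfolding True by simp
  next
    case False
    then obtain r0 where r0: "r0 \<in> ?R" by blast
    have "?R \<subseteq> {r0}" using uniq r0 by blast
    then have "card ?R \<le> card {r0}" by (intro card_mono) auto
    then show ?thesis by simp
  qed
  have "(\<Sum>r'<(2*h)^i'. if ind i' r' s (i,r,q) then wp i' * sz i else 0) = (\<Sum>r'\<in>?R. wp i' * sz i)"
    by (simp add: sum.inter_filter[symmetric] lessThan_def conj_commute)
  also have "\<dots> = real (card ?R) * (wp i' * sz i)" by simp
  also have "\<dots> \<le> 1 * (wp i' * sz i)"
    using card1 by (intro mult_right_mono) (auto simp: wp_nonneg sz_nonneg)
  finally show ?thesis using True by simp
qed

lemma wpsz: "i < i' \<Longrightarrow> i' \<le> k \<Longrightarrow> wp i' * sz i = (1/real h)^(i' - Suc i) / 2"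
proof -
  assume a: "i < i'" "i' \<le> k"
  have hp: "0 < real h" using h2 by simp
  have e1: "k - i = (k - i' + 1) + (i' - Suc i)" using a by simp
  have p1: "(1/real h)^(k-i) = (1/real h)^(k - i' + 1) * (1/real h)^(i' - Suc i)"
    by (subst e1) (rule power_add)
  have hh: "real h * (1/real h) = 1" using hp by simp
  have p2: "real h^(k - i' + 1) * (1/real h)^(k - i' + 1) = 1"
  proof -
    have "(real h * (1/real h))^(k - i' + 1) = 1" unfolding hh by simp
    then show ?thesis by (simp only: power_mult_distrib)
  qed
  have "real h^(k - i' + 1) * (1/real h)^(k-i) = (real h^(k - i' + 1) * (1/real h)^(k - i' + 1)) * (1/real h)^(i' - Suc i)"
    unfolding p1 by (rule mult.assoc[symmetric])
  then have "real h^(k - i' + 1) * (1/real h)^(k-i) = (1/real h)^(i' - Suc i)" unfolding p2 by simp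
  then show ?thesis unfolding wp_def sz_def using a by simp
qed

lemma om_le1:
  assumes J: "J \<in> JS"
  shows "om s J \<le> 1"
proof -
  obtain i r q where Je: "J = (i,r,q)" by (cases J) auto
  have J': "(i,r,q) \<in> JS" using J Je by simp
  have "om s J \<le> (\<Sum>i'\<in>{1..k}. if i < i' then wp i' * sz i else 0)"
    unfolding om_def Je fst_conv
  proof (rule sum_mono)
    fix i' assume "i' \<in> {1..k}"
    then show "(\<Sum>r'<(2*h)^i'. if ind i' r' s (i,r,q) then wp i' * sz i else 0)
        \<le> (if i < i' then wp i' * sz i else 0)" using inner_le[OF J', of i' s] by simp
  qed
  also have "\<dots> = (\<Sum>i'\<in>{Suc i..k}. wp i' * sz i)"
  proof -
    have "{i' \<in> {1..k}. i < i'} = {Suc i..k}" by auto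
    then show ?thesis by (simp add: sum.inter_filter[symmetric])
  qed
  also have "\<dots> = (\<Sum>i'\<in>{Suc i..k}. (1/real h)^(i' - Suc i) / 2)"
    by (rule sum.cong[OF refl]) (simp add: wpsz)
  also have "\<dots> \<le> 1"
  proof (cases "Suc i \<le> k")
    case True
    have "(\<Sum>i'\<in>{Suc i..k}. (1/real h)^(i' - Suc i) / 2) = (\<Sum>m\<in>{0..k - Suc i}. (1/real h)^m / 2)"
      using sum.atLeastAtMost_shift_0[OF True, of "\<lambda>i'. (1/real h)^(i' - Suc i) / 2"] by (simp add: comp_def)
    also have "\<dots> = (\<Sum>m<Suc (k - Suc i). (1/real h)^m) / 2"
      by (simp add: sum_divide_distrib atLeast0AtMost lessThan_Suc_atMost)
    also have "\<dots> \<le> 2 / 2"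
      using geom2[of "1/real h" "Suc (k - Suc i)"] h2 by (intro divide_right_mono) (auto simp: field_simps)
    finally show ?thesis by simp
  next
    case False then show ?thesis by simp
  qed
  finally show ?thesis .
qed

end

context lb begin

definition Wt :: "nat \<Rightarrow> real" where "Wt i' = real h / 2 * (2 * real h)^(k - i')"

definition Tm :: "nat \<Rightarrow> nat \<Rightarrow> nat \<Rightarrow> nat \<times> nat \<times> nat \<Rightarrow> real" where
  "Tm i' r' s J = (if ind i' r' s J then wp i' * sz (fst J) * rho s J else 0)"

lemma Wt_wp: "Wt i' / 2^(k-i') = wp i'"
proof -
  have "(2 * real h)^(k - i') = 2^(k-i') * real h^(k-i')" by (rule power_mult_distrib)
  then have "Wt i' / 2^(k-i') = real h / 2 * real h^(k-i')" unfolding Wt_def by simp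
  also have "\<dots> = wp i'" unfolding wp_def by (simp add: power_Suc2 del: power_Suc)
  finally show ?thesis .
qed

lemma step1:
  assumes ik: "i' \<in> {1..k}" and r: "r' < (2*h)^i'"
  shows "Wt i' * TV i' r' \<le> (\<Sum>s\<in>{1..2 * card JS}. \<Sum>J\<in>JS. Tm i' r' s J)"
proof -
  have ik': "i' \<le> k" using ik by simp
  let ?I = "{a i' r' .. a i' r' + L i' - 1}"
  let ?X = "{J\<in>JS. anc J i' r'}"
  have W0: "0 \<le> Wt i'" unfolding Wt_def by simp
  have "Wt i' * TV i' r' \<le> Wt i' * (\<Sum>s\<in>?I. \<Sum>J\<in>?X. sz (fst J) / 2^(k-i') * rho s J)"
    using TV_rec[OF ik' r] W0 by (rule mult_left_mono)
  also have "\<dots> = (\<Sum>s\<in>?I. \<Sum>J\<in>?X. wp i' * sz (fst J) * rho s J)"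
    unfolding sum_distrib_left
  proof (intro sum.cong refl)
    fix s J
    show "Wt i' * (sz (fst J) / 2^(k-i') * rho s J) = wp i' * sz (fst J) * rho s J"
      unfolding Wt_wp[symmetric] by (simp add: field_simps)
  qed
  also have "\<dots> = (\<Sum>s\<in>{1..2 * card JS}. \<Sum>J\<in>JS. Tm i' r' s J)"
  proof -
    have Isub: "?I \<subseteq> {1..2 * card JS}" using a_pos[of i' r'] t_bound[OF ik' r] by auto
    have "(\<Sum>s\<in>?I. \<Sum>J\<in>?X. wp i' * sz (fst J) * rho s J)
        = (\<Sum>s\<in>{1..2 * card JS}. if s \<in> ?I then (\<Sum>J\<in>?X. wp i' * sz (fst J) * rho s J) else 0)"
    proof -
      have eqI: "{1..2 * card JS} \<inter> ?I = ?I" using Isub by blast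
      have "(\<Sum>s\<in>?I. \<Sum>J\<in>?X. wp i' * sz (fst J) * rho s J) = (\<Sum>s\<in>{1..2 * card JS} \<inter> ?I. \<Sum>J\<in>?X. wp i' * sz (fst J) * rho s J)"
        unfolding eqI ..
      also have "\<dots> = (\<Sum>s\<in>{1..2 * card JS}. if s \<in> ?I then (\<Sum>J\<in>?X. wp i' * sz (fst J) * rho s J) else 0)"
        by (rule sum.inter_restrict) simp
      finally show ?thesis .
    qed
    also have "\<dots> = (\<Sum>s\<in>{1..2 * card JS}. \<Sum>J\<in>JS. Tm i' r' s J)"
    proof (rule sum.cong[OF refl])
      fix s
      have "(\<Sum>J\<in>?X. wp i' * sz (fst J) * rho s J) = (\<Sum>J\<in>JS. if anc J i' r' then wp i' * sz (fst J) * rho s J else 0)"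
        by (rule sum.inter_filter[OF finite_JS])
      then have eqX: "(\<Sum>J\<in>?X. wp i' * sz (fst J) * rho s J) = (\<Sum>J\<in>JS. if anc J i' r' then wp i' * sz (fst J) * rho s J else 0)" .
      show "(if s \<in> ?I then (\<Sum>J\<in>?X. wp i' * sz (fst J) * rho s J) else 0) = (\<Sum>J\<in>JS. Tm i' r' s J)"
      proof (cases "s \<in> ?I")
        case True
        have "(\<Sum>J\<in>JS. Tm i' r' s J) = (\<Sum>J\<in>JS. if anc J i' r' then wp i' * sz (fst J) * rho s J else 0)"
          by (rule sum.cong[OF refl]) (use True in \<open>simp add: Tm_def ind_def\<close>)
        then show ?thesis using True eqX by simp
      next
        case False
        then have "\<And>J. \<not> ind i' r' s J" unfolding ind_def by blast
        then have "\<And>J. Tm i' r' s J = 0" unfolding Tm_def by simp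
        then have z: "(\<Sum>J\<in>JS. Tm i' r' s J) = 0" by simp
        have "(if s \<in> ?I then (\<Sum>J\<in>?X. wp i' * sz (fst J) * rho s J) else 0) = 0"
          using False by (rule if_not_P)
        then show ?thesis using z by simp
      qed
    qed
    finally show ?thesis .
  qed
  finally show ?thesis .
qed

lemma exchange:
  "(\<Sum>i'\<in>{1..k}. \<Sum>r'<(2*h)^i'. \<Sum>s\<in>{1..2 * card JS}. \<Sum>J\<in>JS. Tm i' r' s J)
   = (\<Sum>s\<in>{1..2 * card JS}. \<Sum>J\<in>JS. rho s J * om s J)"
proof -
  let ?NS = "{1..2 * card JS}"
  have "(\<Sum>i'\<in>{1..k}. \<Sum>r'<(2*h)^i'. \<Sum>s\<in>?NS. \<Sum>J\<in>JS. Tm i' r' s J)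
      = (\<Sum>i'\<in>{1..k}. \<Sum>s\<in>?NS. \<Sum>r'<(2*h)^i'. \<Sum>J\<in>JS. Tm i' r' s J)"
    by (rule sum.cong[OF refl]) (rule sum.swap)
  also have "\<dots> = (\<Sum>i'\<in>{1..k}. \<Sum>s\<in>?NS. \<Sum>J\<in>JS. \<Sum>r'<(2*h)^i'. Tm i' r' s J)"
    by (intro sum.cong refl) (rule sum.swap)
  also have "\<dots> = (\<Sum>s\<in>?NS. \<Sum>i'\<in>{1..k}. \<Sum>J\<in>JS. \<Sum>r'<(2*h)^i'. Tm i' r' s J)"
    by (rule sum.swap)
  also have "\<dots> = (\<Sum>s\<in>?NS. \<Sum>J\<in>JS. \<Sum>i'\<in>{1..k}. \<Sum>r'<(2*h)^i'. Tm i' r' s J)"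
    by (rule sum.cong[OF refl]) (rule sum.swap)
  also have "\<dots> = (\<Sum>s\<in>?NS. \<Sum>J\<in>JS. rho s J * om s J)"
  proof (intro sum.cong refl)
    fix s J
    show "(\<Sum>i'\<in>{1..k}. \<Sum>r'<(2*h)^i'. Tm i' r' s J) = rho s J * om s J"
      unfolding om_def Tm_def sum_distrib_left
      by (intro sum.cong refl) simp
  qed
  finally show ?thesis .
qed

lemma total_eq:
  "total_recourse MM (card JS) arr dep x (2 * card JS)
    = (\<Sum>s\<in>{1..2 * card JS}. \<Sum>J\<in>JS. if act (s-1) J \<and> act s J then rho s J else 0)"
  unfolding total_recourse_def
proof (rule sum.cong[OF refl])
  fix s
  show "step_recourse MM (active (card JS) arr dep (s - 1)) (active (card JS) arr dep s) (x (s - 1)) (x s)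
      = (\<Sum>J\<in>JS. if act (s-1) J \<and> act s J then rho s J else 0)"
    unfolding step_eq by (rule sum.inter_filter[OF finite_JS])
qed

lemma rec_lower:
  "real h / 2 * (2 * real h)^k * (real k / 2 - \<alpha>0 + 1/2) \<le> total_recourse MM (card JS) arr dep x (2 * card JS)"
proof -
  have hp: "0 < real h" using h2 by simp
  have "real h / 2 * (2 * real h)^k * (real k / 2 - \<alpha>0 + 1/2) \<le> real h / 2 * (2 * real h)^k * FF k 0 0"
    using root_bound hp by (intro mult_left_mono) auto
  also have "real h / 2 * (2 * real h)^k * FF k 0 0 = (\<Sum>i'\<in>{1..k}. \<Sum>r'<(2*h)^i'. Wt i' * TV i' r')"
    unfolding FF_root sum_distrib_left
  proof (intro sum.cong refl)
    fix i' assume i': "i' \<in> {1..k}"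
    have kk: "(k - i') + i' = k" using i' by simp
    have "(2 * real h)^((k - i') + i') = (2 * real h)^(k - i') * (2 * real h)^i'" by (rule power_add)
    then have "(2 * real h)^k = (2 * real h)^(k - i') * (2 * real h)^i'" unfolding kk .
    then have "real h / 2 * (2 * real h)^k / (2 * real h)^i' = Wt i'"
      unfolding Wt_def using hp by simp
    then have w0: "real h / 2 * (2 * real h)^k / (2 * real h)^i' = Wt i'" .
    have w: "real h / 2 * (2 * real h)^k / real ((2 * h)^i') = Wt i'" using w0 by simp
    have gen: "\<And>X D S::real. X * (S / D) = (X / D) * S" by (simp add: field_simps)
    show "real h / 2 * (2 * real h)^k * ((\<Sum>r'<(2*h)^i'. TV i' r') / (2*h)^i')
        = (\<Sum>r'<(2*h)^i'. Wt i' * TV i' r')"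
      unfolding gen w by (rule sum_distrib_left)
  qed
  also have "\<dots> \<le> (\<Sum>i'\<in>{1..k}. \<Sum>r'<(2*h)^i'. \<Sum>s\<in>{1..2 * card JS}. \<Sum>J\<in>JS. Tm i' r' s J)"
    by (intro sum_mono step1) auto
  also have "\<dots> = (\<Sum>s\<in>{1..2 * card JS}. \<Sum>J\<in>JS. rho s J * om s J)" by (rule exchange)
  also have "\<dots> \<le> (\<Sum>s\<in>{1..2 * card JS}. \<Sum>J\<in>JS. if act (s-1) J \<and> act s J then rho s J else 0)"
  proof (intro sum_mono)
    fix s J assume J: "J \<in> JS"
    show "rho s J * om s J \<le> (if act (s-1) J \<and> act s J then rho s J else 0)"
    proof (cases "om s J = 0")
      case True then show ?thesis using rho_nonneg by simp
    next
      case False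
      then have "act (s-1) J \<and> act s J" using om_act[OF J] by simp
      moreover have "rho s J * om s J \<le> rho s J * 1"
        using om_le1[OF J] rho_nonneg by (rule mult_left_mono)
      ultimately show ?thesis by simp
    qed
  qed
  also have "\<dots> = total_recourse MM (card JS) arr dep x (2 * card JS)" by (rule total_eq[symmetric])
  finally show ?thesis .
qed

end


context inst begin

lemma card2: "2 * card JS = (k+2) * (2*h)^k"
  using card_JS unfolding L_def by simp

lemma main_inst:
  "valid_instance MM (card JS) pj Aj arr dep 1 \<and> 2 * card JS = (k+2) * (2*h)^k \<and>
   (\<forall>x \<beta> \<alpha>0. maintains_makespan MM (card JS) pj Aj arr dep x (\<alpha>0 * 1) \<and>
       amortized_recourse MM (card JS) arr dep x \<beta> \<longrightarrow>
       real h * (real k / 2 - \<alpha>0 + 1/2) / (2 * (real k + 2)) \<le> \<beta>)"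
proof (intro conjI allI impI)
  show "valid_instance MM (card JS) pj Aj arr dep 1" by (rule valid)
  show "2 * card JS = (k+2) * (2*h)^k" by (rule card2)
  fix x \<beta> \<alpha>0
  assume as: "maintains_makespan MM (card JS) pj Aj arr dep x (\<alpha>0 * 1) \<and>
       amortized_recourse MM (card JS) arr dep x \<beta>"
  interpret lb h k x \<alpha>0 by unfold_locales (use as in auto)
  have R: "real h / 2 * (2 * real h)^k * (real k / 2 - \<alpha>0 + 1/2) \<le> total_recourse MM (card JS) arr dep x (2 * card JS)"
    by (rule rec_lower)
  have "1 * 1 \<le> (k+2) * (2*h)^k" using h2 by (intro mult_le_mono) auto
  then have pos: "1 \<le> 2 * card JS" using card2 by simp
  have "2 * card JS \<in> {1..2 * card JS}" using pos by simp
  then have A: "total_recourse MM (card JS) arr dep x (2 * card JS) \<le> \<beta> * real (2 * card JS)"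
    using as unfolding amortized_recourse_def by blast
  have c2: "real (2 * card JS) = (real k + 2) * (2 * real h)^k"
    using card2 by (metis of_nat_add of_nat_mult of_nat_numeral of_nat_power)
  define P where "P = (2 * real h)^k"
  have P: "0 < P" unfolding P_def using h2 by simp
  have "(real h / 2 * (real k / 2 - \<alpha>0 + 1/2)) * P \<le> (\<beta> * (real k + 2)) * P"
    using R A c2 unfolding P_def by (simp add: algebra_simps)
  then have X: "real h / 2 * (real k / 2 - \<alpha>0 + 1/2) \<le> \<beta> * (real k + 2)"
    using P by (simp only: mult_le_cancel_right_pos)
  have e1: "real h * (real k / 2 - \<alpha>0 + 1/2) = 2 * (real h / 2 * (real k / 2 - \<alpha>0 + 1/2))" by simp
  have e2: "\<beta> * (2 * (real k + 2)) = 2 * (\<beta> * (real k + 2))" by simp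
  have "real h * (real k / 2 - \<alpha>0 + 1/2) \<le> \<beta> * (2 * (real k + 2))"
    unfolding e1 e2 using X by linarith
  moreover have "0 < 2 * (real k + 2)" by simp
  ultimately show "real h * (real k / 2 - \<alpha>0 + 1/2) / (2 * (real k + 2)) \<le> \<beta>"
    by (simp add: pos_divide_le_eq)
qed

end

lemma triv_instance:
  fixes a0 :: real
  assumes "1 \<le> n" "a0 < 1"
  shows "\<exists>M p A arr dep T. valid_instance M n p A arr dep T \<and>
      (\<forall>x \<beta>. \<not> maintains_makespan M n p A arr dep x (a0 * T))"
proof (intro exI conjI allI)
  let ?M = "{0::nat}" and ?p = "\<lambda>j::nat. 1::real" and ?A = "\<lambda>j::nat. {0::nat}"
     and ?arr = "\<lambda>j::nat. j + 1" and ?dep = "\<lambda>j::nat. n + j + 1" and ?T = "real n"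
  show "valid_instance ?M n ?p ?A ?arr ?dep ?T"
    unfolding valid_instance_def
  proof (intro conjI allI impI)
    show "finite ?M" "?M \<noteq> {}" by auto
    fix j assume "j < n" then show "0 < ?p j" "?A j \<subseteq> ?M" "?A j \<noteq> {}" by auto
  next
    show "valid_events n ?arr ?dep"
      unfolding valid_events_def
    proof (intro conjI allI impI)
      fix j show "j < n \<Longrightarrow> j + 1 < n + j + 1" using assms by simp
    next
      show "inj_on ?arr {..<n}" "inj_on ?dep {..<n}" by (auto simp: inj_on_def)
      show "?arr ` {..<n} \<inter> ?dep ` {..<n} = {}" by auto
      show "?arr ` {..<n} \<union> ?dep ` {..<n} = {1..2*n}"
      proof (intro equalityI subsetI)
        fix y assume "y \<in> ?arr ` {..<n} \<union> ?dep ` {..<n}" then show "y \<in> {1..2*n}" by auto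
      next
        fix y assume y: "y \<in> {1..2*n}"
        show "y \<in> ?arr ` {..<n} \<union> ?dep ` {..<n}"
        proof (cases "y \<le> n")
          case True then have "y = ?arr (y - 1)" "y - 1 < n" using y by auto
          then show ?thesis by blast
        next
          case False then have "y = ?dep (y - n - 1)" "y - n - 1 < n" using y by auto
          then show ?thesis by blast
        qed
      qed
    qed
  next
    fix t show "admits_schedule ?M ?p ?A (active n ?arr ?dep t) ?T"
      unfolding admits_schedule_def
    proof (intro exI[of _ "\<lambda>j. 0"] conjI ballI)
      fix j show "(0::nat) \<in> ?A j" by simp
    next
      fix i assume "i \<in> ?M"
      have sub: "{j \<in> active n ?arr ?dep t. 0 = i} \<subseteq> {..<n}" unfolding active_def by auto
      have "card {j \<in> active n ?arr ?dep t. 0 = i} \<le> card {..<n}"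
        by (rule card_mono[OF _ sub]) simp
      then show "(\<Sum>j\<in>{j \<in> active n ?arr ?dep t. 0 = i}. ?p j) \<le> ?T" by simp
    qed
  qed
  fix x \<beta>
  show "\<not> maintains_makespan ?M n ?p ?A ?arr ?dep x (a0 * ?T)"
  proof
    assume mm: "maintains_makespan ?M n ?p ?A ?arr ?dep x (a0 * ?T)"
    have act: "active n ?arr ?dep n = {..<n}" unfolding active_def by auto
    have m1: "frac_schedule ?M ?A (active n ?arr ?dep n) (x n) \<and> makespan ?M ?p (active n ?arr ?dep n) (x n) \<le> a0 * ?T"
      using mm unfolding maintains_makespan_def by (erule_tac x=n in allE) simp
    have fs: "frac_schedule ?M ?A {..<n} (x n)" and ms: "makespan ?M ?p {..<n} (x n) \<le> a0 * ?T"
      using m1 unfolding act by auto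
    have one: "\<And>j. j < n \<Longrightarrow> x n j 0 = 1" using fs unfolding frac_schedule_def by auto
    have "makespan ?M ?p {..<n} (x n) = frac_load ?p {..<n} (x n) 0" unfolding makespan_def by simp
    also have "\<dots> = real n" unfolding frac_load_def using one by simp
    finally have "real n \<le> a0 * real n" using ms by simp
    moreover have "a0 * real n < real n" using assms by simp
    ultimately show False by simp
  qed
qed



lemma nk_ge:
  assumes "2 \<le> h" "1 \<le> k" "2 * n = (k+2) * (2*h)^k"
  shows "k \<le> n" "2 * h \<le> n"
proof -
  have "k < 2^k" by (rule less_exp)
  also have "(2::nat)^k \<le> (2*h)^k" using assms by (intro power_mono) auto
  finally have a: "k \<le> (2*h)^k" by simp
  have "(2*h)^1 \<le> (2*h)^k" using assms by (intro power_increasing) auto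
  then have b: "2*h \<le> (2*h)^k" by simp
  have "2 * (2*h)^k \<le> (k+2) * (2*h)^k" by (intro mult_right_mono) auto
  then have c: "(2*h)^k \<le> n" using assms(3) by simp
  show "k \<le> n" using a c by simp
  show "2 * h \<le> n" using b c by simp
qed

lemma nk_mono:
  assumes "2 \<le> h" "k1 \<le> k2" "2 * n1 = (k1+2) * (2*h)^k1" "2 * n2 = (k2+2) * (2*h)^k2"
  shows "n1 \<le> n2"
proof -
  have "(2*h)^k1 \<le> (2*h)^k2" using assms by (intro power_increasing) auto
  then have "(k1+2) * (2*h)^k1 \<le> (k2+2) * (2*h)^k2" using assms(2) by (intro mult_le_mono) auto
  then show ?thesis using assms(3,4) by simp
qed

lemma ln_nk:
  assumes "2 \<le> h" "1 \<le> k" "2 * n = (k+2) * (2*h)^k"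
  shows "ln (real n) \<le> real k * (1 + ln (2 * real h))"
proof -
  have hp: "0 < 2 * real h" using assms by simp
  have rn: "real n = (real k + 2) / 2 * (2 * real h)^k"
  proof -
    have "real (2 * n) = real ((k+2) * (2*h)^k)" using assms(3) by simp
    then have "2 * real n = (real k + 2) * (2 * real h)^k"
      by (simp only: of_nat_mult of_nat_add of_nat_power of_nat_numeral)
    then show ?thesis by simp
  qed
  have p1: "0 < (real k + 2) / 2" by simp
  have p2: "0 < (2 * real h)^k" using hp by simp
  have "ln (real n) = ln ((real k + 2) / 2) + ln ((2 * real h)^k)"
  proof -
    have lm: "\<And>x y::real. 0 < x \<Longrightarrow> 0 < y \<Longrightarrow> ln (x*y) = ln x + ln y" by (simp add: ln_mult)
    show ?thesis unfolding rn by (rule lm[OF p1 p2])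
  qed
  also have "ln ((2 * real h)^k) = real k * ln (2 * real h)" by (rule ln_realpow)
  also have "ln ((real k + 2) / 2) \<le> (real k + 2) / 2 - 1" by (rule ln_le_minus_one[OF p1])
  finally have "ln (real n) \<le> (real k + 2) / 2 - 1 + real k * ln (2 * real h)" by simp
  also have "(real k + 2) / 2 - 1 = real k / 2" by (simp add: field_simps)
  finally have "ln (real n) \<le> real k / 2 + real k * ln (2 * real h)" .
  also have "\<dots> \<le> real k * (1 + ln (2 * real h))" by (simp add: algebra_simps)
  finally show ?thesis .
qed

lemma final_bound:
  fixes a :: real
  assumes h: "1536 \<le> h" and a1: "1 \<le> a" and k4: "4 * a \<le> real k" and kl: "real k < 4 * a + 1"
    and n: "2 * n = (k+2) * (2*h)^k" and k1: "1 \<le> k"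
  shows "real n powr (1/10 / a) \<le> real h * (real k / 2 - a + 1/2) / (2 * (real k + 2))"
proof -
  have h2: "2 \<le> h" using h by simp
  have hp: "0 < real h" using h by simp
  have npos: "0 < real n" using nk_ge(1)[OF h2 k1 n] k1 by simp
  have b1: "real h / 16 \<le> real h * (real k / 2 - a + 1/2) / (2 * (real k + 2))"
  proof -
    have "(real k + 2) / 8 \<le> real k / 2 - a + 1/2" using k4 by simp
    then have "real h * ((real k + 2) / 8) \<le> real h * (real k / 2 - a + 1/2)"
      using hp by (intro mult_left_mono) auto
    moreover have "real h * ((real k + 2) / 8) / (2 * (real k + 2)) = real h / 16" by (simp add: field_simps)
    ultimately show ?thesis by (metis divide_right_mono of_nat_0_le_iff zero_le_mult_iff zero_le_numeral
        add_nonneg_nonneg)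
  qed
  have lnb: "ln (real n) \<le> real k * (1 + ln (2 * real h))" by (rule ln_nk[OF h2 k1 n])
  have lpos: "0 \<le> 1 + ln (2 * real h)" using h by simp
  have "real k \<le> 5 * a" using kl a1 by simp
  then have "real k * (1 + ln (2 * real h)) \<le> 5 * a * (1 + ln (2 * real h))"
    using lpos by (intro mult_right_mono) auto
  with lnb have "ln (real n) \<le> 5 * a * (1 + ln (2 * real h))" by simp
  then have "1/10 / a * ln (real n) \<le> 1/10 / a * (5 * a * (1 + ln (2 * real h)))"
    using a1 by (intro mult_left_mono) auto
  also have "\<dots> = (1 + ln (2 * real h)) / 2" using a1 by (simp add: field_simps)
  finally have y: "1/10 / a * ln (real n) \<le> (1 + ln (2 * real h)) / 2" .
  have "real n powr (1/10 / a) = exp (1/10 / a * ln (real n))" using npos by (simp add: powr_def)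
  also have "\<dots> \<le> exp ((1 + ln (2 * real h)) / 2)" using y by simp
  also have "\<dots> \<le> real h / 16"
  proof (rule power2_le_imp_le)
    have "(exp ((1 + ln (2 * real h)) / 2))^2 = exp (1 + ln (2 * real h))"
      by (simp add: exp_double[symmetric] power2_eq_square exp_add[symmetric])
    also have "\<dots> = exp 1 * (2 * real h)" using hp by (simp add: exp_add)
    also have "\<dots> \<le> 3 * (2 * real h)" using exp_le hp by (intro mult_right_mono) auto
    also have "\<dots> \<le> (real h / 16)^2" using h by (simp add: power2_eq_square field_simps)
    finally show "(exp ((1 + ln (2 * real h)) / 2))^2 \<le> (real h / 16)^2" .
    show "0 \<le> real h / 16" by simp
  qed
  also have "\<dots> \<le> real h * (real k / 2 - a + 1/2) / (2 * (real k + 2))" by (rule b1)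
  finally show ?thesis .
qed



theorem theorem9:
  fixes \<alpha> :: "nat \<Rightarrow> real"
  assumes "mono \<alpha>"
    and "\<alpha> \<in> o(\<lambda>n. ln (real n))"
  shows "\<exists>c>0. \<forall>N. \<exists>n\<ge>N. \<exists>M p A arr dep T.
           valid_instance M n p A arr dep T \<and>
           (\<forall>x \<beta>. maintains_makespan M n p A arr dep x (\<alpha> n * T) \<and>
                   amortized_recourse M n arr dep x \<beta> \<longrightarrow>
                   \<beta> \<ge> real n powr (c / \<alpha> n))"
proof -
  have main: "\<forall>N. \<exists>n\<ge>N. \<exists>M p A arr dep T.
           valid_instance M n p A arr dep T \<and>
           (\<forall>x \<beta>. maintains_makespan M n p A arr dep x (\<alpha> n * T) \<and>
                   amortized_recourse M n arr dep x \<beta> \<longrightarrow>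
                   \<beta> \<ge> real n powr ((1/10) / \<alpha> n))"
  proof
    fix N :: nat
    define h where "h = max N 1536"
    have hN: "N \<le> h" "1536 \<le> h" "2 \<le> h" unfolding h_def by auto
    have instk: "\<And>k. 1 \<le> k \<Longrightarrow> inst h k" unfolding inst_def using hN by simp
    define nk where "nk k = card (inst.JS h k)" for k
    have MI: "\<And>k. 1 \<le> k \<Longrightarrow> 2 * nk k = (k+2)*(2*h)^k \<and>
       (\<exists>M p A arr dep. valid_instance M (nk k) p A arr dep 1 \<and>
         (\<forall>x \<beta> \<alpha>0. maintains_makespan M (nk k) p A arr dep x (\<alpha>0 * 1) \<and>
             amortized_recourse M (nk k) arr dep x \<beta> \<longrightarrow>
             real h * (real k / 2 - \<alpha>0 + 1/2) / (2 * (real k + 2)) \<le> \<beta>))"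
    proof -
      fix k :: nat assume "1 \<le> k"
      then have I: "inst h k" by (rule instk)
      from inst.main_inst[OF I] show "2 * nk k = (k+2)*(2*h)^k \<and>
       (\<exists>M p A arr dep. valid_instance M (nk k) p A arr dep 1 \<and>
         (\<forall>x \<beta> \<alpha>0. maintains_makespan M (nk k) p A arr dep x (\<alpha>0 * 1) \<and>
             amortized_recourse M (nk k) arr dep x \<beta> \<longrightarrow>
             real h * (real k / 2 - \<alpha>0 + 1/2) / (2 * (real k + 2)) \<le> \<beta>))"
        unfolding nk_def by blast
    qed
    define \<epsilon> where "\<epsilon> = 1 / (4 * (1 + ln (2 * real h)))"
    have "1 \<le> 2 * real h" using hN by simp
    then have "0 \<le> ln (2 * real h)" by (rule ln_ge_zero)
    then have lpos: "0 < 1 + ln (2 * real h)" by simp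
    have epos: "0 < \<epsilon>" unfolding \<epsilon>_def using lpos by simp
    have "eventually (\<lambda>n. norm (\<alpha> n) \<le> \<epsilon> * norm (ln (real n))) at_top"
      by (rule landau_o.smallD[OF assms(2) epos])
    then obtain K0 where K0: "\<And>n. K0 \<le> n \<Longrightarrow> norm (\<alpha> n) \<le> \<epsilon> * norm (ln (real n))"
      unfolding eventually_at_top_linorder by blast
    define Pk where "Pk k \<longleftrightarrow> 1 \<le> k \<and> 4 * \<alpha> (nk k) \<le> real k" for k
    have exP: "\<exists>k. Pk k"
    proof -
      define k where "k = max 1 K0"
      have k1: "1 \<le> k" by (simp add: k_def)
      have n2: "2 * nk k = (k+2)*(2*h)^k" using MI[OF k1] by simp
      have kn: "k \<le> nk k" by (rule nk_ge(1)[OF hN(3) k1 n2])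
      then have "K0 \<le> nk k" unfolding k_def by simp
      then have A: "norm (\<alpha> (nk k)) \<le> \<epsilon> * norm (ln (real (nk k)))" by (rule K0)
      have n1: "1 \<le> real (nk k)" using kn k1 by simp
      then have l0: "0 \<le> ln (real (nk k))" by simp
      have l1: "ln (real (nk k)) \<le> real k * (1 + ln (2 * real h))" by (rule ln_nk[OF hN(3) k1 n2])
      have "\<alpha> (nk k) \<le> \<epsilon> * ln (real (nk k))" using A l0 by simp
      also have "\<dots> \<le> \<epsilon> * (real k * (1 + ln (2 * real h)))" using l1 epos by (intro mult_left_mono) auto
      also have "\<dots> = real k / 4" unfolding \<epsilon>_def using lpos by (simp add: field_simps)
      finally have "4 * \<alpha> (nk k) \<le> real k" by simp
      then show ?thesis using k1 unfolding Pk_def by blast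
    qed
    define k where "k = (LEAST k. Pk k)"
    have Pk: "Pk k" unfolding k_def by (rule LeastI_ex[OF exP])
    have k1: "1 \<le> k" and k4: "4 * \<alpha> (nk k) \<le> real k" using Pk unfolding Pk_def by auto
    have n2: "2 * nk k = (k+2)*(2*h)^k" using MI[OF k1] by simp
    obtain M p A arr dep where V: "valid_instance M (nk k) p A arr dep 1" and
      LB: "\<forall>x \<beta> \<alpha>0. maintains_makespan M (nk k) p A arr dep x (\<alpha>0 * 1) \<and>
             amortized_recourse M (nk k) arr dep x \<beta> \<longrightarrow>
             real h * (real k / 2 - \<alpha>0 + 1/2) / (2 * (real k + 2)) \<le> \<beta>"
      using MI[OF k1] by blast
    have nN: "N \<le> nk k" using nk_ge(2)[OF hN(3) k1 n2] hN(1) by simp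
    show "\<exists>n\<ge>N. \<exists>M p A arr dep T.
           valid_instance M n p A arr dep T \<and>
           (\<forall>x \<beta>. maintains_makespan M n p A arr dep x (\<alpha> n * T) \<and>
                   amortized_recourse M n arr dep x \<beta> \<longrightarrow>
                   \<beta> \<ge> real n powr ((1/10) / \<alpha> n))"
    proof (cases "\<alpha> (nk k) < 1")
      case True
      have n1: "1 \<le> nk k" using nk_ge(1)[OF hN(3) k1 n2] k1 by simp
      obtain M' p' A' arr' dep' T' where V': "valid_instance M' (nk k) p' A' arr' dep' T'"
        and NM: "\<forall>x \<beta>. \<not> maintains_makespan M' (nk k) p' A' arr' dep' x (\<alpha> (nk k) * T')"
        using triv_instance[OF n1 True] by blast
      have "valid_instance M' (nk k) p' A' arr' dep' T' \<and>
           (\<forall>x \<beta>. maintains_makespan M' (nk k) p' A' arr' dep' x (\<alpha> (nk k) * T') \<and>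
                   amortized_recourse M' (nk k) arr' dep' x \<beta> \<longrightarrow>
                   \<beta> \<ge> real (nk k) powr ((1/10) / \<alpha> (nk k)))"
        using V' NM by blast
      then show ?thesis using nN by blast
    next
      case False
      then have a1: "1 \<le> \<alpha> (nk k)" by simp
      have k2: "2 \<le> k" using k4 a1 by simp
      have "k - 1 < k" using k1 by simp
      then have notP: "\<not> Pk (k - 1)" unfolding k_def by (rule not_less_Least)
      have k1': "1 \<le> k - 1" using k2 by simp
      then have lt: "real (k - 1) < 4 * \<alpha> (nk (k - 1))" using notP unfolding Pk_def by simp
      have n2': "2 * nk (k-1) = ((k-1)+2)*(2*h)^(k-1)" using MI[OF k1'] by simp
      have "nk (k - 1) \<le> nk k" by (rule nk_mono[OF hN(3) _ n2' n2]) simp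
      then have "\<alpha> (nk (k - 1)) \<le> \<alpha> (nk k)" by (rule monoD[OF assms(1)])
      moreover have "real (k - 1) = real k - 1" using k1 by simp
      ultimately have kl: "real k < 4 * \<alpha> (nk k) + 1" using lt by simp
      have FB: "real (nk k) powr (1/10 / \<alpha> (nk k)) \<le> real h * (real k / 2 - \<alpha> (nk k) + 1/2) / (2 * (real k + 2))"
        by (rule final_bound[OF hN(2) a1 k4 kl n2 k1])
      have "\<forall>x \<beta>. maintains_makespan M (nk k) p A arr dep x (\<alpha> (nk k) * 1) \<and>
                   amortized_recourse M (nk k) arr dep x \<beta> \<longrightarrow>
                   \<beta> \<ge> real (nk k) powr ((1/10) / \<alpha> (nk k))"
      proof (intro allI impI)
        fix x \<beta>
        assume "maintains_makespan M (nk k) p A arr dep x (\<alpha> (nk k) * 1) \<and>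
                   amortized_recourse M (nk k) arr dep x \<beta>"
        then have "real h * (real k / 2 - \<alpha> (nk k) + 1/2) / (2 * (real k + 2)) \<le> \<beta>"
          using LB by blast
        then show "\<beta> \<ge> real (nk k) powr ((1/10) / \<alpha> (nk k))" using FB by simp
      qed
      then show ?thesis using V nN by blast
    qed
  qed
  show ?thesis
    by (rule exI[of _ "1/10"]) (use main in simp)
qed


end
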